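(* Assume $\delta_s\ge\delta_M$, let $\theta>0$ satisfy $\mathcal R(\theta)<1$, and let $\alpha>0$, $\beta_s>0$. Then $\mathbf 0\in\mathcal D'$ is globally asymptotically stable in $\mathcal D'=[0,+\infty)^4$ (in the Filippov sense) for the closed-loop system $$\dot E=\beta_E F\Big(1-\frac EK\Big)-(\nu_E+\delta_E)E,\quad \dot M=(1-\nu)\nu_E E-\delta_M M,\quad \dot F=\nu\nu_E E\frac{M}{M+\gamma_sM_s}-\delta_F F,\quad \dot M_s=u(E,M,F,M_s)-\delta_sM_s,$$ where $u=\max(0,G)$ is the feedback defined below.
   Context: Parameters: $\beta_E,\nu_E,\delta_E,\delta_M,\delta_F,\delta_s,K>0$, $\nu\in(0,1)$, $\gamma_s\in(0,1]$. $\mathcal R_0:=\dfrac{\beta_E\nu\nu_E}{\delta_F(\nu_E+\delta_E)}$, $\mathcal R(\theta):=\dfrac{\mathcal R_0}{1+\gamma_s\theta}$, $\psi:=\dfrac{2\beta_E\nu\nu_E}{\delta_F(1-\mathcal R(\theta))(1+\gamma_s\theta)}$. Define $G:\mathcal D'\to\mathbb R$ by $G=0$ if $M+M_s=0$ and otherwise $$G=\frac{\gamma_s\psi E(\theta M+M_s)^2}{\alpha(M+\gamma_sM_s)(3\theta M+M_s)}+\frac{\big((1-\nu)\nu_E\theta E-\theta\delta_MM\big)(\theta M+3M_s)}{3\theta M+M_s}+\delta_sM_s+\frac{\beta_s}{\alpha}(\theta M-M_s),$$ and $u:=\max(0,G)$ (so $u\ge0$, $u\in L^\infty_{loc}(\mathcal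 D')$). With $X(z)$ the closed-loop right-hand side (its value on the null set $\{M=M_s=0\}$ being irrelevant), Filippov solutions are locally Lipschitz curves $z:I\to\mathcal D'$ such that for a.e. $t$, $\dot z(t)\in\bigcap_{\varepsilon>0}\bigcap_{N}\overline{\mathrm{conv}}\,X\big(((z(t)+\varepsilon B)\cap\mathcal D')\setminus N\big)$, with $B$ the unit ball of $\mathbb R^4$ and $N$ ranging over Lebesgue-null sets. $\mathbf 0$ is globally asymptotically stable in $\mathcal S\subset\mathcal D'$ if (stability) for every $\varepsilon>0$ there is $\delta>0$ such that every Filippov solution with $z(0)\in\mathcal S$, $\|z(0)\|<\delta$ satisfies $\|z(t)\|<\varepsilon$ for all $t>0$, and (attractivity) every Filippov solution with $z(0)\in\mathcal S$ tends to $\mathbf 0$. *)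

theory Defs
  imports "HOL-Analysis.Analysis"
begin

text \<open>State z = (E, M, F, M_s) in real^4, with E = z$1, M = z$2, F = z$3, M_s = z$4.\<close>

definition vec4 :: "real \<Rightarrow> real \<Rightarrow> real \<Rightarrow> real \<Rightarrow> real ^ 4" where
  "vec4 a b c d = (\<chi> i. if i = 1 then a else if i = 2 then b else if i = 3 then c else d)"

definition Dprime :: "(real ^ 4) set" where
  "Dprime = {z. \<forall>i. 0 \<le> z $ i}"

definition R0 :: "real \<Rightarrow> real \<Rightarrow> real \<Rightarrow> real \<Rightarrow> real \<Rightarrow> real" where
  "R0 \<beta>E \<nu> \<nu>E \<delta>E \<delta>F = (\<beta>E * \<nu> * \<nu>E) / (\<delta>F * (\<nu>E + \<delta>E))"

definition Rtheta :: "real \<Rightarrow> real \<Rightarrow> real \<Rightarrow> real \<Rightarrow> real \<Rightarrow> real \<Rightarrow> real \<Rightarrow> real" where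
  "Rtheta \<beta>E \<nu> \<nu>E \<delta>E \<delta>F \<gamma>s \<theta> = R0 \<beta>E \<nu> \<nu>E \<delta>E \<delta>F / (1 + \<gamma>s * \<theta>)"

definition psi :: "real \<Rightarrow> real \<Rightarrow> real \<Rightarrow> real \<Rightarrow> real \<Rightarrow> real \<Rightarrow> real \<Rightarrow> real" where
  "psi \<beta>E \<nu> \<nu>E \<delta>E \<delta>F \<gamma>s \<theta> =
     (2 * \<beta>E * \<nu> * \<nu>E) /
     (\<delta>F * (1 - Rtheta \<beta>E \<nu> \<nu>E \<delta>E \<delta>F \<gamma>s \<theta>) * (1 + \<gamma>s * \<theta>))"

definition Gfb :: "real \<Rightarrow> real \<Rightarrow> real \<Rightarrow> real \<Rightarrow> real \<Rightarrow> real \<Rightarrow> real \<Rightarrow> real \<Rightarrow> real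
     \<Rightarrow> real \<Rightarrow> real \<Rightarrow> real ^ 4 \<Rightarrow> real" where
  "Gfb \<beta>E \<nu>E \<delta>E \<delta>M \<delta>F \<delta>s \<nu> \<gamma>s \<theta> \<alpha> \<beta>s z =
     (let E = z $ 1; M = z $ 2; Ms = z $ 4;
          \<psi> = psi \<beta>E \<nu> \<nu>E \<delta>E \<delta>F \<gamma>s \<theta> in
      if M + Ms = 0 then 0 else
        \<gamma>s * \<psi> * E * (\<theta> * M + Ms)\<^sup>2 / (\<alpha> * (M + \<gamma>s * Ms) * (3 * \<theta> * M + Ms))
        + ((1 - \<nu>) * \<nu>E * \<theta> * E - \<theta> * \<delta>M * M) * (\<theta> * M + 3 * Ms) / (3 * \<theta> * M + Ms)
        + \<delta>s * Ms + (\<beta>s / \<alpha>) * (\<theta> * M - Ms))"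

definition ufb :: "real \<Rightarrow> real \<Rightarrow> real \<Rightarrow> real \<Rightarrow> real \<Rightarrow> real \<Rightarrow> real \<Rightarrow> real \<Rightarrow> real
     \<Rightarrow> real \<Rightarrow> real \<Rightarrow> real ^ 4 \<Rightarrow> real" where
  "ufb \<beta>E \<nu>E \<delta>E \<delta>M \<delta>F \<delta>s \<nu> \<gamma>s \<theta> \<alpha> \<beta>s z =
     max 0 (Gfb \<beta>E \<nu>E \<delta>E \<delta>M \<delta>F \<delta>s \<nu> \<gamma>s \<theta> \<alpha> \<beta>s z)"

text \<open>Closed-loop right-hand side X(z). (Its value where M + gamma_s M_s = 0 is irrelevant;
  Isabelle's division by zero gives 0 there.)\<close>
definition Xcl :: "real \<Rightarrow> real \<Rightarrow> real \<Rightarrow> real \<Rightarrow> real \<Rightarrow> real \<Rightarrow> real \<Rightarrow> real \<Rightarrow> real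
     \<Rightarrow> real \<Rightarrow> real \<Rightarrow> real \<Rightarrow> real ^ 4 \<Rightarrow> real ^ 4" where
  "Xcl \<beta>E \<nu>E \<delta>E \<delta>M \<delta>F \<delta>s K \<nu> \<gamma>s \<theta> \<alpha> \<beta>s z =
     (let E = z $ 1; M = z $ 2; F = z $ 3; Ms = z $ 4 in
      vec4 (\<beta>E * F * (1 - E / K) - (\<nu>E + \<delta>E) * E)
           ((1 - \<nu>) * \<nu>E * E - \<delta>M * M)
           (\<nu> * \<nu>E * E * (M / (M + \<gamma>s * Ms)) - \<delta>F * F)
           (ufb \<beta>E \<nu>E \<delta>E \<delta>M \<delta>F \<delta>s \<nu> \<gamma>s \<theta> \<alpha> \<beta>s z - \<delta>s * Ms))"

definition filippov_set :: "(real ^ 4) set \<Rightarrow> (real ^ 4 \<Rightarrow> real ^ 4) \<Rightarrow> real ^ 4 \<Rightarrow> (real ^ 4) set" where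
  "filippov_set D X x =
     (\<Inter>e\<in>{0<..}. \<Inter>N\<in>null_sets lebesgue. closure (convex hull (X ` ((ball x e \<inter> D) - N))))"

definition filippov_solution :: "(real ^ 4) set \<Rightarrow> (real ^ 4 \<Rightarrow> real ^ 4) \<Rightarrow> (real \<Rightarrow> real ^ 4) \<Rightarrow> bool" where
  "filippov_solution D X z \<longleftrightarrow>
     (\<forall>t\<ge>0. z t \<in> D) \<and>
     (\<forall>t\<ge>0. \<exists>e>0. \<exists>L. L-lipschitz_on ({0..} \<inter> cball t e) z) \<and>
     (AE t in lborel. 0 \<le> t \<longrightarrow>
        (\<exists>v. (z has_vector_derivative v) (at t within {0..}) \<and> v \<in> filippov_set D X (z t)))"

definition filippov_GAS :: "(real ^ 4) set \<Rightarrow> (real ^ 4 \<Rightarrow> real ^ 4) \<Rightarrow> (real ^ 4) set \<Rightarrow> bool" where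
  "filippov_GAS D X S \<longleftrightarrow>
     (\<forall>\<epsilon>>0. \<exists>\<delta>>0. \<forall>z. filippov_solution D X z \<and> z 0 \<in> S \<and> norm (z 0) < \<delta> \<longrightarrow>
         (\<forall>t>0. norm (z t) < \<epsilon>)) \<and>
     (\<forall>z. filippov_solution D X z \<and> z 0 \<in> S \<longrightarrow> (z \<longlongrightarrow> 0) at_top)"

end

theory Submission
  imports Defs
begin


definition plip :: "(real \<Rightarrow> real) \<Rightarrow> real set \<Rightarrow> bool" where
  "plip h S \<longleftrightarrow> (\<forall>x\<in>S. \<exists>T B. open T \<and> x \<in> T \<and> (\<forall>y\<in>S\<inter>T. \<bar>h y - h x\<bar> \<le> B * \<bar>y - x\<bar>))"

lemma plip_cont:
  assumes "plip h S" shows "continuous_on S h"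
  unfolding continuous_on_iff
proof (intro ballI allI impI)
  fix x e assume x: "x \<in> S" and e: "(0::real) < e"
  obtain T B where T: "open T" "x \<in> T" and B: "\<forall>y\<in>S\<inter>T. \<bar>h y - h x\<bar> \<le> B * \<bar>y - x\<bar>"
    using assms x unfolding plip_def by blast
  obtain r where r: "r > 0" "ball x r \<subseteq> T" using T openE by blast
  define d where "d = min r (e / (\<bar>B\<bar> + 1))"
  have d: "d > 0" using r e by (simp add: d_def)
  show "\<exists>d>0. \<forall>x'\<in>S. dist x' x < d \<longrightarrow> dist (h x') (h x) < e"
  proof (intro exI[of _ d] conjI ballI impI d)
    fix y assume y: "y \<in> S" "dist y x < d"
    then have "y \<in> T" using r(2) by (auto simp: d_def dist_commute)
    then have "\<bar>h y - h x\<bar> \<le> B * \<bar>y - x\<bar>" using B y by blast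
    also have "\<dots> \<le> \<bar>B\<bar> * \<bar>y - x\<bar>" by (simp add: mult_right_mono)
    also have "\<dots> \<le> \<bar>B\<bar> * d" using y(2) by (simp add: dist_real_def mult_left_mono)
    also have "\<dots> < e"
    proof -
      have "d \<le> e / (\<bar>B\<bar> + 1)" by (simp add: d_def)
      then have "\<bar>B\<bar> * d \<le> \<bar>B\<bar> * (e / (\<bar>B\<bar> + 1))" by (rule mult_left_mono) simp
      also have "\<dots> < e" using e by (simp add: field_simps)
      finally show ?thesis .
    qed
    finally show "dist (h y) (h x) < e" by (simp add: dist_real_def)
  qed
qed

lemma plip_add_lin:
  assumes "plip h S" shows "plip (\<lambda>t. h t + c * t) S"
  unfolding plip_def
proof
  fix x assume "x \<in> S"
  then obtain T B where T: "open T" "x \<in> T" and B: "\<forall>y\<in>S\<inter>T. \<bar>h y - h x\<bar> \<le> B * \<bar>y - x\<bar>"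
    using assms unfolding plip_def by blast
  show "\<exists>T B. open T \<and> x \<in> T \<and> (\<forall>y\<in>S \<inter> T. \<bar>h y + c * y - (h x + c * x)\<bar> \<le> B * \<bar>y - x\<bar>)"
  proof (intro exI conjI ballI)
    fix y assume y: "y \<in> S \<inter> T"
    have "\<bar>h y + c * y - (h x + c * x)\<bar> \<le> \<bar>h y - h x\<bar> + \<bar>c\<bar> * \<bar>y - x\<bar>"
      by (metis abs_mult abs_triangle_ineq add_diff_add right_diff_distrib)
    also have "\<dots> \<le> (B + \<bar>c\<bar>) * \<bar>y - x\<bar>" using B y by (simp add: algebra_simps)
    finally show "\<bar>h y + c * y - (h x + c * x)\<bar> \<le> (B + \<bar>c\<bar>) * \<bar>y - x\<bar>" .
  qed (use T in auto)
qed

lemma core_mono_strict: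
  fixes k :: "real \<Rightarrow> real"
  assumes ab: "a \<le> b" and pl: "plip k {a..b}" and N: "negligible N"
    and der: "\<And>t. t \<in> {a..<b} - N \<Longrightarrow> \<exists>d. (k has_real_derivative d) (at t within {a..b}) \<and> d < 0"
  shows "k b \<le> k a"
proof (rule ccontr)
  assume "\<not> k b \<le> k a"
  then have lt: "k a < k b" by simp
  have negim: "negligible (k ` (N \<inter> {a..b}))"
  proof (rule negligible_locally_Lipschitz_image)
    show "DIM(real) \<le> DIM(real)" by simp
    show "negligible (N \<inter> {a..b})" using N negligible_subset by blast
    fix x assume x: "x \<in> N \<inter> {a..b}"
    then obtain T B where T: "open T" "x \<in> T" and B: "\<forall>y\<in>{a..b}\<inter>T. \<bar>k y - k x\<bar> \<le> B * \<bar>y - x\<bar>"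
      using pl unfolding plip_def by blast
    show "\<exists>T B. open T \<and> x \<in> T \<and> (\<forall>y\<in>N \<inter> {a..b} \<inter> T. norm (k y - k x) \<le> B * norm (y - x))"
      using T B by (intro exI[of _ T] exI[of _ B]) auto
  qed
  have "\<not> {k a<..<k b} \<subseteq> k ` (N \<inter> {a..b})"
  proof
    assume "{k a<..<k b} \<subseteq> k ` (N \<inter> {a..b})"
    then have "negligible {k a<..<k b}" using negim negligible_subset by blast
    moreover have "{k a<..<k b} \<noteq> {}" using lt by (simp add: dense)
    ultimately show False using open_not_negligible[of "{k a<..<k b}"] by auto
  qed
  then obtain y where y0: "y \<in> {k a<..<k b}" "y \<notin> k ` (N \<inter> {a..b})" by blast
  then have y: "k a < y" "y < k b" "y \<notin> k ` (N \<inter> {a..b})" by auto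
  have cont: "continuous_on {a..b} k" using pl by (rule plip_cont)
  define C where "C = {a..b} \<inter> k -` {..y}"
  have Ccl: "closed C" unfolding C_def
    by (rule continuous_closed_preimage[OF cont]) auto
  have aC: "a \<in> C" using ab y by (simp add: C_def)
  have bdd: "bdd_above C" by (auto simp: C_def bdd_above_def)
  define s where "s = Sup C"
  have sC: "s \<in> C" unfolding s_def using Ccl aC bdd closed_contains_Sup by blast
  have sge: "\<And>\<tau>. \<tau> \<in> C \<Longrightarrow> \<tau> \<le> s" unfolding s_def using bdd by (simp add: cSup_upper)
  have s_ab: "a \<le> s" "s \<le> b" "k s \<le> y" using sC by (auto simp: C_def)
  have above: "\<And>\<tau>. s < \<tau> \<Longrightarrow> \<tau> \<le> b \<Longrightarrow> y < k \<tau>"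
  proof -
    fix \<tau> assume "s < \<tau>" "\<tau> \<le> b"
    then have "\<tau> \<notin> C" using sge by force
    then show "y < k \<tau>" using \<open>s < \<tau>\<close> \<open>\<tau> \<le> b\<close> s_ab by (auto simp: C_def)
  qed
  have sb: "s < b" using s_ab y(2) by (metis order_le_less not_le)
  have atr: "at s within {s..b} = at_right s" using sb by (rule at_within_Icc_at_right)
  have ks: "k s = y"
  proof -
    have "(k \<longlongrightarrow> k s) (at s within {s..b})"
      using continuous_on_subset[OF cont, of "{s..b}"] s_ab sb
      by (auto simp: continuous_on_def)
    then have lim: "(k \<longlongrightarrow> k s) (at_right s)" using atr by simp
    have ev: "eventually (\<lambda>\<tau>. y \<le> k \<tau>) (at_right s)"
      unfolding eventually_at_right[OF sb] using above by (intro exI[of _ b]) (auto intro: less_imp_le sb)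
    have "y \<le> k s" by (rule tendsto_lowerbound[OF lim ev]) simp
    then show ?thesis using s_ab by simp
  qed
  have sN: "s \<notin> N" using y(3) ks s_ab by auto
  obtain d where d: "(k has_real_derivative d) (at s within {a..b})" "d < 0"
    using der[of s] sN s_ab sb by auto
  have "(k has_real_derivative d) (at s within {s..b})"
    using d(1) by (rule DERIV_subset) (use s_ab in auto)
  then have "((\<lambda>\<tau>. (k \<tau> - k s) / (\<tau> - s)) \<longlongrightarrow> d) (at_right s)"
    using atr by (simp add: has_field_derivative_iff)
  moreover have "eventually (\<lambda>\<tau>. 0 \<le> (k \<tau> - k s) / (\<tau> - s)) (at_right s)"
    unfolding eventually_at_right[OF sb] using above ks
    by (intro exI[of _ b]) (auto intro!: divide_nonneg_pos less_imp_le sb)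
  ultimately have "0 \<le> d" by (rule tendsto_lowerbound) simp
  then show False using d(2) by simp
qed

lemma core_mono:
  fixes h :: "real \<Rightarrow> real"
  assumes ab: "a \<le> b" and pl: "plip h {a..b}" and N: "negligible N"
    and der: "\<And>t. t \<in> {a..<b} - N \<Longrightarrow> \<exists>d. (h has_real_derivative d) (at t within {a..b}) \<and> d \<le> 0"
  shows "h b \<le> h a"
proof -
  have "h b - h a \<le> \<epsilon> * (b - a)" if e: "\<epsilon> > 0" for \<epsilon>
  proof -
    have "(\<lambda>t. h t + (- \<epsilon>) * t) b \<le> (\<lambda>t. h t + (- \<epsilon>) * t) a"
    proof (rule core_mono_strict[OF ab plip_add_lin[OF pl] N])
      fix t assume "t \<in> {a..<b} - N"
      then obtain d where d: "(h has_real_derivative d) (at t within {a..b})" "d \<le> 0" using der by blast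
      have "((\<lambda>t. h t + (- \<epsilon>) * t) has_real_derivative d + (- \<epsilon>)) (at t within {a..b})"
        by (rule derivative_eq_intros d(1))+ auto
      then show "\<exists>d. ((\<lambda>t. h t + - \<epsilon> * t) has_real_derivative d) (at t within {a..b}) \<and> d < 0"
        using d(2) e by (intro exI conjI) auto
    qed
    then show ?thesis by (simp add: algebra_simps)
  qed
  then have "h b - h a \<le> 0"
  proof (cases "a = b")
    case False
    with ab have "b - a > 0" by simp
    show ?thesis
    proof (rule ccontr)
      assume "\<not> h b - h a \<le> 0"
      then have p: "h b - h a > 0" by simp
      define \<epsilon> where "\<epsilon> = (h b - h a) / (2 * (b - a))"
      have "\<epsilon> > 0" using p \<open>b - a > 0\<close> by (simp add: \<epsilon>_def)
      then have "h b - h a \<le> \<epsilon> * (b - a)" using \<open>\<And>\<epsilon>. \<epsilon> > 0 \<Longrightarrow> _\<close> by blast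
      also have "\<dots> = (h b - h a) / 2" using \<open>b - a > 0\<close> by (simp add: \<epsilon>_def field_simps)
      finally show False using p by simp
    qed
  qed simp
  then show ?thesis by simp
qed

lemma plip_subset: assumes "plip h S" "T \<subseteq> S" shows "plip h T"
  unfolding plip_def
proof
  fix x assume "x \<in> T"
  then have "x \<in> S" using assms(2) by blast
  then obtain U B where U: "open U" "x \<in> U" "\<forall>y\<in>S\<inter>U. \<bar>h y - h x\<bar> \<le> B * \<bar>y - x\<bar>"
    using assms(1) unfolding plip_def by blast
  then show "\<exists>U B. open U \<and> x \<in> U \<and> (\<forall>y\<in>T \<inter> U. \<bar>h y - h x\<bar> \<le> B * \<bar>y - x\<bar>)"
    using assms(2) by blast
qed

lemma deriv_plip:
  assumes "\<And>x. x \<in> S \<Longrightarrow> \<exists>d. (g has_real_derivative d) (at x)"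
  shows "plip g S"
  unfolding plip_def
proof
  fix x assume "x \<in> S"
  then obtain d where d: "(g has_real_derivative d) (at x)" using assms by blast
  then have "((\<lambda>y. (g y - g x) / (y - x)) \<longlongrightarrow> d) (at x)" by (simp add: has_field_derivative_iff)
  then have "eventually (\<lambda>y. dist ((g y - g x) / (y - x)) d < 1) (at x)"
    by (rule tendstoD) simp
  then obtain T where T: "open T" "x \<in> T" "\<And>y. y \<in> T \<Longrightarrow> y \<noteq> x \<Longrightarrow> dist ((g y - g x) / (y - x)) d < 1"
    unfolding eventually_at_topological by blast
  show "\<exists>T B. open T \<and> x \<in> T \<and> (\<forall>y\<in>S \<inter> T. \<bar>g y - g x\<bar> \<le> B * \<bar>y - x\<bar>)"
  proof (intro exI[of _ T] exI[of _ "\<bar>d\<bar> + 1"] conjI ballI T(1,2))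
    fix y assume y: "y \<in> S \<inter> T"
    show "\<bar>g y - g x\<bar> \<le> (\<bar>d\<bar> + 1) * \<bar>y - x\<bar>"
    proof (cases "y = x")
      case False
      then have "\<bar>(g y - g x) / (y - x) - d\<bar> < 1" using T(3)[of y] y by (auto simp: dist_real_def)
      then have "\<bar>(g y - g x) / (y - x)\<bar> \<le> \<bar>d\<bar> + 1" by arith
      then have "\<bar>g y - g x\<bar> / \<bar>y - x\<bar> \<le> \<bar>d\<bar> + 1" by (simp add: abs_divide)
      then show ?thesis using False by (simp add: divide_le_eq)
    qed simp
  qed
qed

lemma plip_mult:
  assumes f: "plip f S" and g: "plip g S"
  shows "plip (\<lambda>x. f x * g x) S"
  unfolding plip_def
proof
  fix x assume x: "x \<in> S"
  obtain T1 B1 where T1: "open T1" "x \<in> T1" and B1: "\<forall>y\<in>S\<inter>T1. \<bar>f y - f x\<bar> \<le> B1 * \<bar>y - x\<bar>"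
    using f x unfolding plip_def by blast
  obtain T2 B2 where T2: "open T2" "x \<in> T2" and B2: "\<forall>y\<in>S\<inter>T2. \<bar>g y - g x\<bar> \<le> B2 * \<bar>y - x\<bar>"
    using g x unfolding plip_def by blast
  define T where "T = T1 \<inter> T2 \<inter> ball x 1"
  show "\<exists>T B. open T \<and> x \<in> T \<and> (\<forall>y\<in>S \<inter> T. \<bar>f y * g y - f x * g x\<bar> \<le> B * \<bar>y - x\<bar>)"
  proof (intro exI[of _ T] exI[of _ "(\<bar>f x\<bar> + \<bar>B1\<bar>) * \<bar>B2\<bar> + \<bar>g x\<bar> * \<bar>B1\<bar>"] conjI ballI)
    show "open T" "x \<in> T" using T1 T2 by (auto simp: T_def)
    fix y assume y: "y \<in> S \<inter> T"
    have yx: "\<bar>y - x\<bar> \<le> 1" using y by (auto simp: T_def dist_real_def)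
    have "B1 * \<bar>y - x\<bar> \<le> \<bar>B1\<bar> * \<bar>y - x\<bar>" by (rule mult_right_mono) auto
    moreover have "\<bar>f y - f x\<bar> \<le> B1 * \<bar>y - x\<bar>" using B1 y by (auto simp: T_def)
    ultimately have hf: "\<bar>f y - f x\<bar> \<le> \<bar>B1\<bar> * \<bar>y - x\<bar>" by linarith
    have "B2 * \<bar>y - x\<bar> \<le> \<bar>B2\<bar> * \<bar>y - x\<bar>" by (rule mult_right_mono) auto
    moreover have "\<bar>g y - g x\<bar> \<le> B2 * \<bar>y - x\<bar>" using B2 y by (auto simp: T_def)
    ultimately have hg: "\<bar>g y - g x\<bar> \<le> \<bar>B2\<bar> * \<bar>y - x\<bar>" by linarith
    have fy: "\<bar>f y\<bar> \<le> \<bar>f x\<bar> + \<bar>B1\<bar>"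
    proof -
      have "\<bar>B1\<bar> * \<bar>y - x\<bar> \<le> \<bar>B1\<bar>" using yx by (simp add: mult_left_le)
      then show ?thesis using hf by linarith
    qed
    have "\<bar>f y * g y - f x * g x\<bar> = \<bar>f y * (g y - g x) + g x * (f y - f x)\<bar>" by (simp add: algebra_simps)
    also have "\<dots> \<le> \<bar>f y\<bar> * \<bar>g y - g x\<bar> + \<bar>g x\<bar> * \<bar>f y - f x\<bar>"
      by (metis abs_mult abs_triangle_ineq)
    also have "\<dots> \<le> (\<bar>f x\<bar> + \<bar>B1\<bar>) * (\<bar>B2\<bar> * \<bar>y - x\<bar>) + \<bar>g x\<bar> * (\<bar>B1\<bar> * \<bar>y - x\<bar>)"
      by (intro add_mono mult_mono fy hg hf mult_left_mono) auto
    also have "\<dots> = ((\<bar>f x\<bar> + \<bar>B1\<bar>) * \<bar>B2\<bar> + \<bar>g x\<bar> * \<bar>B1\<bar>) * \<bar>y - x\<bar>" by (simp add: algebra_simps)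
    finally show "\<bar>f y * g y - f x * g x\<bar> \<le> ((\<bar>f x\<bar> + \<bar>B1\<bar>) * \<bar>B2\<bar> + \<bar>g x\<bar> * \<bar>B1\<bar>) * \<bar>y - x\<bar>" .
  qed
qed

lemma plip_diff_const: "plip f S \<Longrightarrow> plip (\<lambda>x. f x - c) S"
  unfolding plip_def by simp

lemma expo_bound:
  fixes w :: "real \<Rightarrow> real"
  assumes st: "s \<le> t" and dl: "\<delta> > 0" and pl: "plip w {s..t}" and N: "negligible N"
    and der: "\<And>\<tau>. \<tau> \<in> {s..<t} - N \<Longrightarrow> \<exists>d. (w has_real_derivative d) (at \<tau> within {s..t}) \<and> d \<le> G - \<delta> * w \<tau>"
  shows "w t \<le> G / \<delta> + exp (- \<delta> * (t - s)) * (w s - G / \<delta>)"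
proof -
  define h where "h \<tau> = exp (\<delta> * \<tau>) * (w \<tau> - G / \<delta>)" for \<tau>
  have plh: "plip h {s..t}" unfolding h_def
  proof (rule plip_mult[OF deriv_plip plip_diff_const[OF pl]])
    fix x show "\<exists>d. ((\<lambda>\<tau>. exp (\<delta> * \<tau>)) has_real_derivative d) (at x)"
      by (rule exI[of _ "exp(\<delta>*x)*\<delta>"]) (auto intro!: derivative_eq_intros)
  qed
  have "h t \<le> h s"
  proof (rule core_mono[OF st plh N])
    fix \<tau> assume "\<tau> \<in> {s..<t} - N"
    then obtain d where d: "(w has_real_derivative d) (at \<tau> within {s..t})" "d \<le> G - \<delta> * w \<tau>"
      using der by blast
    have "(h has_real_derivative (exp (\<delta> * \<tau>) * (\<delta> * (w \<tau> - G / \<delta>) + d))) (at \<tau> within {s..t})"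
      unfolding h_def
    proof (rule DERIV_mult'[THEN DERIV_cong])
      show "((\<lambda>\<tau>. exp (\<delta> * \<tau>)) has_real_derivative exp (\<delta> * \<tau>) * \<delta>) (at \<tau> within {s..t})"
        by (auto intro!: derivative_eq_intros)
      show "((\<lambda>\<tau>. w \<tau> - G / \<delta>) has_real_derivative d) (at \<tau> within {s..t})"
        using d(1) by (auto intro!: derivative_eq_intros)
    qed (simp add: algebra_simps)
    moreover have "exp (\<delta> * \<tau>) * (\<delta> * (w \<tau> - G / \<delta>) + d) \<le> 0"
    proof -
      have "\<delta> * (w \<tau> - G / \<delta>) + d \<le> 0" using d(2) dl by (simp add: algebra_simps)
      then show ?thesis by (simp add: mult_nonneg_nonpos)
    qed
    ultimately show "\<exists>d. (h has_real_derivative d) (at \<tau> within {s..t}) \<and> d \<le> 0" by blast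
  qed
  then have "exp (\<delta> * t) * (w t - G / \<delta>) \<le> exp (\<delta> * s) * (w s - G / \<delta>)" by (simp add: h_def)
  then have ineq: "exp (- \<delta> * t) * (exp (\<delta> * t) * (w t - G / \<delta>)) \<le> exp (- \<delta> * t) * (exp (\<delta> * s) * (w s - G / \<delta>))"
    by (rule mult_left_mono) simp
  have eq1: "exp (- \<delta> * t) * (exp (\<delta> * t) * (w t - G / \<delta>)) = w t - G / \<delta>"
  proof -
    have "exp (- \<delta> * t) * exp (\<delta> * t) = 1" by (simp add: exp_add[symmetric])
    then show ?thesis by (metis mult.assoc mult_1)
  qed
  have eq2: "exp (- \<delta> * t) * (exp (\<delta> * s) * (w s - G / \<delta>)) = exp (- \<delta> * (t - s)) * (w s - G / \<delta>)"
  proof -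
    have "exp (- \<delta> * t) * exp (\<delta> * s) = exp (- \<delta> * (t - s))"
      by (simp add: exp_add[symmetric] right_diff_distrib)
    then show ?thesis by (metis mult.assoc)
  qed
  have "w t - G / \<delta> \<le> exp (- \<delta> * (t - s)) * (w s - G / \<delta>)" using ineq unfolding eq1 eq2 .
  then show ?thesis by simp
qed


lemma lyap_alg:
  fixes \<beta>E \<nu>E \<delta>E \<delta>M \<delta>F \<delta>s K \<nu> \<gamma>s \<theta> \<alpha> \<beta>s E M F Ms :: real
  assumes pos: "\<beta>E > 0" "\<nu>E > 0" "\<delta>E > 0" "\<delta>M > 0" "\<delta>F > 0" "\<delta>s > 0" "K > 0"
    "0 < \<nu>" "\<nu> < 1" "0 < \<gamma>s" "\<delta>s \<ge> \<delta>M" "\<theta> > 0" "\<alpha> > 0" "\<beta>s > 0"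
    and Rlt: "R < 1"
    and Rdef: "R = (\<beta>E * \<nu> * \<nu>E) / (\<delta>F * (\<nu>E + \<delta>E)) / (1 + \<gamma>s * \<theta>)"
    and \<psi>def: "\<psi> = (2 * \<beta>E * \<nu> * \<nu>E) / (\<delta>F * (1 - R) * (1 + \<gamma>s * \<theta>))"
    and cdef: "c = 2 / (1 - R)" and c'def: "c' = c * \<beta>E / \<delta>F"
    and nn: "E \<ge> 0" "M \<ge> 0" "F \<ge> 0" "Ms \<ge> 0" and MMs: "M + Ms > 0"
    and Gdef: "G = \<gamma>s * \<psi> * E * (\<theta> * M + Ms)\<^sup>2 / (\<alpha> * (M + \<gamma>s * Ms) * (3 * \<theta> * M + Ms))
        + ((1 - \<nu>) * \<nu>E * \<theta> * E - \<theta> * \<delta>M * M) * (\<theta> * M + 3 * Ms) / (3 * \<theta> * M + Ms)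
        + \<delta>s * Ms + (\<beta>s / \<alpha>) * (\<theta> * M - Ms)"
    and e1: "e1 = \<beta>E * F * (1 - E / K) - (\<nu>E + \<delta>E) * E"
    and e2: "e2 = (1 - \<nu>) * \<nu>E * E - \<delta>M * M"
    and e3: "e3 = \<nu> * \<nu>E * E * (M / (M + \<gamma>s * Ms)) - \<delta>F * F"
    and e4: "e4 = max 0 G - \<delta>s * Ms"
  shows "c * e1 + c' * e3 + \<alpha> * ((\<theta>*M - Ms) * ((\<theta>*M + 3*Ms) * (\<theta> * e2) - (3*\<theta>*M + Ms) * e4) / (\<theta>*M + Ms)\<^sup>2)
         \<le> - 2 * (\<nu>E + \<delta>E) * E"
proof -
  define a where "a = \<theta> * M"
  define b where "b = Ms"
  define P where "P = M + \<gamma>s * Ms"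
  define u where "u = max 0 G"
  have a0: "a \<ge> 0" and b0: "b \<ge> 0" using nn pos by (auto simp: a_def b_def)
  have P0: "P > 0" using nn pos MMs unfolding P_def
    by (metis add_pos_nonneg add_nonneg_pos mult_pos_pos order_less_le mult_nonneg_nonneg less_eq_real_def)
  have s0: "a + b > 0" using nn pos MMs unfolding a_def b_def
    by (metis add_pos_nonneg add_nonneg_pos mult_pos_pos order_less_le mult_nonneg_nonneg less_eq_real_def)
  have S30: "3 * a + b > 0" using s0 a0 by simp
  have oR: "1 - R > 0" using Rlt by simp
  have g1: "1 + \<gamma>s * \<theta> > 0" using pos by (simp add: add_pos_pos)
  have c0: "c > 0" using oR cdef by simp
  have \<psi>0: "\<psi> \<ge> 0" unfolding \<psi>def using pos oR g1 by (intro divide_nonneg_pos mult_pos_pos) auto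
  have cbeta: "c' * \<delta>F = c * \<beta>E" using pos c'def by simp
  have lin_eq: "- c * (\<nu>E + \<delta>E) * E + c' * \<nu> * \<nu>E * E * (M / P) = - 2 * (\<nu>E + \<delta>E) * E + \<psi> * \<gamma>s * (a - b) * E / P"
  proof -
    have Pn: "P \<noteq> 0" using P0 by auto
    define g where "g = 1 + \<gamma>s * \<theta>"
    have gn: "g \<noteq> 0" using g1 by (simp add: g_def)
    have "1 / g + \<gamma>s * (a - b) / (P * g) = P / (P * g) + \<gamma>s * (a - b) / (P * g)" using Pn by simp
    also have "\<dots> = (P + \<gamma>s * (a - b)) / (P * g)" by (simp add: add_divide_distrib)
    also have "P + \<gamma>s * (a - b) = M * g" unfolding P_def a_def b_def g_def by (simp add: algebra_simps)
    also have "M * g / (P * g) = M / P" using gn by simp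
    finally have "M / P = 1 / (1 + \<gamma>s * \<theta>) + \<gamma>s * (a - b) / (P * (1 + \<gamma>s * \<theta>))" by (simp add: g_def)
    define D1 where "D1 = \<nu>E + \<delta>E"
    define w where "w = 1 - R"
    have D1p: "D1 > 0" using pos by (simp add: D1_def)
    have wp: "w > 0" using oR by (simp add: w_def)
    have R': "R = (\<beta>E * \<nu> * \<nu>E) / (\<delta>F * D1 * g)" unfolding Rdef D1_def g_def by simp
    have \<psi>': "\<psi> = (2 * \<beta>E * \<nu> * \<nu>E) / (\<delta>F * w * g)" unfolding \<psi>def w_def g_def by simp
    have c': "c = 2 / w" unfolding cdef w_def by simp
    have "c' * \<nu> * \<nu>E = c * D1 * R * g"
      unfolding c'def R' using pos D1p gn by (simp add: field_simps)
    moreover have "c * D1 * R = \<psi>"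
      unfolding \<psi>' c' R' using pos gn D1p wp by (simp add: field_simps)
    moreover have "c * w = 2" using c' wp by simp
    ultimately have i1: "c' * \<nu> * \<nu>E = \<psi> * g" and i2: "c * w = 2" by (simp_all add: algebra_simps)
    have "- c * (\<nu>E + \<delta>E) * E + c' * \<nu> * \<nu>E * E * (M / P)
       = - c * D1 * E + \<psi> * g * E * (1 / g + \<gamma>s * (a - b) / (P * g))"
      using i1 \<open>M / P = _\<close> by (simp add: D1_def g_def mult.assoc mult.commute mult.left_commute)
    also have "\<dots> = - c * D1 * E + \<psi> * E + \<psi> * \<gamma>s * (a - b) * E / P"
      using gn Pn by (simp add: field_simps)
    finally have st: "- c * (\<nu>E + \<delta>E) * E + c' * \<nu> * \<nu>E * E * (M / P) = - c * D1 * E + \<psi> * E + \<psi> * \<gamma>s * (a - b) * E / P" .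
    have "- c * D1 * E + \<psi> * E = - c * D1 * E + c * D1 * R * E" using \<open>c * D1 * R = \<psi>\<close> by simp
    also have "\<dots> = - (c * w) * D1 * E" by (simp add: w_def algebra_simps)
    also have "\<dots> = - 2 * D1 * E" using i2 by simp
    finally have "- c * D1 * E + \<psi> * E = - 2 * D1 * E" .
    then show ?thesis using st by (simp add: D1_def)
  qed
  have lin: "c * e1 + c' * e3 \<le> - 2 * (\<nu>E + \<delta>E) * E + \<psi> * \<gamma>s * (a - b) * E / P"
  proof -
    have "c * e1 + c' * e3 = - c * \<beta>E * F * E / K + (- c * (\<nu>E + \<delta>E) * E + c' * \<nu> * \<nu>E * E * (M / P))"
      unfolding e1 e3 P_def using cbeta pos by (simp add: field_simps)
    moreover have "c * \<beta>E * F * E / K \<ge> 0" using c0 pos nn by simp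
    ultimately show ?thesis using lin_eq by linarith
  qed
  define Q where "Q = (a + 3*b) * (\<theta> * e2) - (3*a + b) * e4"
  have lhs_eq: "\<alpha> * ((\<theta>*M - Ms) * ((\<theta>*M + 3*Ms) * (\<theta> * e2) - (3*\<theta>*M + Ms) * e4) / (\<theta>*M + Ms)\<^sup>2)
       = \<alpha> * (a - b) * Q / (a + b)\<^sup>2" unfolding a_def b_def Q_def by simp
  have Gmul: "G * (3*a + b) = \<gamma>s * \<psi> * E * (a + b)\<^sup>2 / (\<alpha> * P) + (\<theta> * e2) * (a + 3 * b) + \<delta>s * b * (3*a+b)
      + (\<beta>s / \<alpha>) * (a - b) * (3*a+b)"
  proof -
    define S3 where "S3 = 3*a + b"
    define T1 where "T1 = \<gamma>s * \<psi> * E * (a + b)\<^sup>2"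
    define T2 where "T2 = (\<theta> * e2) * (a + 3 * b)"
    have S3p: "S3 > 0" using S30 by (simp add: S3_def)
    have "G = T1 / (\<alpha> * P * S3) + T2 / S3 + \<delta>s * b + (\<beta>s / \<alpha>) * (a - b)"
      unfolding Gdef T1_def T2_def S3_def P_def a_def b_def e2 by (simp add: algebra_simps)
    then have "G * S3 = T1 / (\<alpha> * P) + T2 + \<delta>s * b * S3 + (\<beta>s / \<alpha>) * (a - b) * S3"
      using S3p P0 pos by (simp add: field_simps)
    then show ?thesis by (simp add: S3_def T1_def T2_def)
  qed
  have Qeq: "Q = (3*a+b) * (G - u) - \<gamma>s * \<psi> * E * (a + b)\<^sup>2 / (\<alpha> * P) - (\<beta>s / \<alpha>) * (a - b) * (3*a+b)"
    unfolding Q_def e4 u_def[symmetric] b_def[symmetric] using Gmul by (simp add: algebra_simps)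
  have phi_eq: "\<alpha> * (a - b) * Q / (a + b)\<^sup>2 = \<alpha> * (a - b) * (3*a+b) * (G - u) / (a + b)\<^sup>2
      - \<psi> * \<gamma>s * (a - b) * E / P - \<beta>s * (a - b)\<^sup>2 * (3*a+b) / (a + b)\<^sup>2"
    unfolding Qeq using s0 P0 pos by (simp add: field_simps) (simp add: algebra_simps power2_eq_square)
  have t3: "\<beta>s * (a - b)\<^sup>2 * (3*a+b) / (a + b)\<^sup>2 \<ge> 0" using pos S30 by simp
  show ?thesis
  proof (cases "a \<ge> b \<or> u = G")
    case True
    have "(a - b) * (G - u) \<le> 0"
      using True by (cases "a \<ge> b") (auto simp: u_def mult_nonneg_nonpos)
    then have "\<alpha> * (a - b) * (3*a+b) * (G - u) / (a + b)\<^sup>2 \<le> 0"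
    proof -
      have "(3*a+b) * ((a - b) * (G - u)) \<le> 0" using S30 \<open>(a - b) * (G - u) \<le> 0\<close> by (simp add: mult_nonneg_nonpos)
      then have "\<alpha> * ((3*a+b) * ((a - b) * (G - u))) \<le> 0" using pos by (simp add: mult_nonneg_nonpos)
      then have "\<alpha> * ((3*a+b) * ((a - b) * (G - u))) / (a + b)\<^sup>2 \<le> 0" by (simp add: divide_nonpos_nonneg)
      then show ?thesis by (simp add: algebra_simps)
    qed
    then show ?thesis using lin phi_eq t3 lhs_eq by linarith
  next
    case False
    then have ab: "a < b" and u0: "u = 0" by (auto simp: u_def)
    have "Q = (a + 3*b) * (\<theta> * e2) + (3*a + b) * (\<delta>s * b)" unfolding Q_def e4 u_def[symmetric] b_def[symmetric] u0 by simp
    moreover have "\<theta> * e2 \<ge> - \<delta>M * a"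
    proof -
      have "(1 - \<nu>) * \<nu>E * E * \<theta> \<ge> 0" using pos nn by simp
      then show ?thesis unfolding e2 a_def by (simp add: algebra_simps)
    qed
    ultimately have "Q \<ge> (a + 3*b) * (- \<delta>M * a) + (3*a + b) * (\<delta>M * b)"
    proof -
      assume q: "Q = (a + 3*b) * (\<theta> * e2) + (3*a + b) * (\<delta>s * b)" and t: "\<theta> * e2 \<ge> - \<delta>M * a"
      have "(a + 3*b) * (- \<delta>M * a) \<le> (a + 3*b) * (\<theta> * e2)" using t a0 b0 by (intro mult_left_mono) auto
      moreover have "(3*a + b) * (\<delta>M * b) \<le> (3*a + b) * (\<delta>s * b)" using pos b0 S30 by (intro mult_left_mono mult_right_mono) auto
      ultimately show ?thesis using q by linarith
    qed
    moreover have "(a + 3*b) * (- \<delta>M * a) + (3*a + b) * (\<delta>M * b) = \<delta>M * (b - a) * (b + a)" by (simp add: algebra_simps)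
    moreover have "\<delta>M * (b - a) * (b + a) \<ge> 0" using ab a0 pos by simp
    ultimately have Q0: "Q \<ge> 0" by linarith
    have "\<alpha> * (a - b) * Q / (a + b)\<^sup>2 \<le> 0"
      using Q0 ab pos by (intro divide_nonpos_nonneg) (auto simp: mult_nonpos_nonneg mult_nonneg_nonpos)
    moreover have "\<psi> * \<gamma>s * (a - b) * E / P \<le> 0"
      using \<psi>0 ab pos nn P0 by (intro divide_nonpos_pos) (auto simp: mult_nonneg_nonpos mult_nonpos_nonneg)
    ultimately show ?thesis using lin lhs_eq by linarith
  qed
qed

lemma ms_alg:
  fixes \<beta>E \<nu>E \<delta>E \<delta>M \<delta>F \<delta>s K \<nu> \<gamma>s \<theta> \<alpha> \<beta>s E M F Ms :: real
  assumes pos: "\<nu>E > 0" "\<delta>M > 0" "\<delta>s > 0"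
    "0 < \<nu>" "\<nu> < 1" "0 < \<gamma>s" "\<theta> > 0" "\<alpha> > 0" "\<beta>s > 0" and \<psi>0: "\<psi> \<ge> 0"
    and nn: "E \<ge> 0" "M \<ge> 0" "Ms \<ge> 0" and MMs: "M + Ms > 0"
    and Gdef: "G = \<gamma>s * \<psi> * E * (\<theta> * M + Ms)\<^sup>2 / (\<alpha> * (M + \<gamma>s * Ms) * (3 * \<theta> * M + Ms))
        + ((1 - \<nu>) * \<nu>E * \<theta> * E - \<theta> * \<delta>M * M) * (\<theta> * M + 3 * Ms) / (3 * \<theta> * M + Ms)
        + \<delta>s * Ms + (\<beta>s / \<alpha>) * (\<theta> * M - Ms)"
    and Cdef: "C = \<gamma>s * \<psi> * (\<theta> + 1 / \<gamma>s) / \<alpha> + 3 * \<theta> * (1 - \<nu>) * \<nu>E + \<beta>s * \<theta> / \<alpha>"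
  shows "max 0 G - \<delta>s * Ms \<le> C * (E + M) - min \<delta>s (\<beta>s / \<alpha>) * Ms"
proof -
  define a where "a = \<theta> * M"
  define b where "b = Ms"
  define P where "P = M + \<gamma>s * Ms"
  define S3 where "S3 = 3 * a + b"
  have a0: "a \<ge> 0" and b0: "b \<ge> 0" using nn pos by (auto simp: a_def b_def)
  have P0: "P > 0" using nn pos MMs unfolding P_def
    by (metis add_pos_nonneg add_nonneg_pos mult_pos_pos order_less_le mult_nonneg_nonneg less_eq_real_def)
  have s0: "a + b > 0" using nn pos MMs unfolding a_def b_def
    by (metis add_pos_nonneg add_nonneg_pos mult_pos_pos order_less_le mult_nonneg_nonneg less_eq_real_def)
  have S30: "S3 > 0" using s0 a0 by (simp add: S3_def)
  have C1: "\<gamma>s * \<psi> * (\<theta> + 1 / \<gamma>s) / \<alpha> \<ge> 0" using pos \<psi>0 by simp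
  have C0: "C \<ge> 0" unfolding Cdef using C1 pos by (intro add_nonneg_nonneg) auto
  have dmin: "min \<delta>s (\<beta>s / \<alpha>) * Ms \<le> \<delta>s * Ms" "min \<delta>s (\<beta>s / \<alpha>) * Ms \<le> (\<beta>s / \<alpha>) * Ms"
    using nn by (intro mult_right_mono; simp)+
  show ?thesis
  proof (cases "G \<le> 0")
    case True
    then have "max 0 G - \<delta>s * Ms = - \<delta>s * Ms" by simp
    moreover have "C * (E + M) \<ge> 0" using C0 nn by simp
    ultimately show ?thesis using dmin by linarith
  next
    case False
    define T1 where "T1 = \<gamma>s * \<psi> * E * (a + b)\<^sup>2 / (\<alpha> * P * S3)"
    define T2 where "T2 = ((1 - \<nu>) * \<nu>E * \<theta> * E - \<theta> * \<delta>M * M) * (a + 3 * b) / S3"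
    have Geq: "G = T1 + T2 + \<delta>s * b + (\<beta>s / \<alpha>) * (a - b)"
      unfolding Gdef T1_def T2_def a_def b_def P_def S3_def by (simp add: algebra_simps)
    have T1b: "T1 \<le> \<gamma>s * \<psi> * (\<theta> + 1 / \<gamma>s) / \<alpha> * E"
    proof -
      have "(a + b)\<^sup>2 / (P * S3) \<le> (a + b) / P"
      proof -
        have "(a + b)\<^sup>2 / (P * S3) = ((a + b) / P) * ((a + b) / S3)" by (simp add: power2_eq_square)
        also have "\<dots> \<le> ((a + b) / P) * 1"
          using s0 P0 S30 a0 by (intro mult_left_mono) (auto simp: S3_def)
        finally show ?thesis by simp
      qed
      also have "(a + b) / P \<le> \<theta> + 1 / \<gamma>s"
      proof -
        have "a + b \<le> (\<theta> + 1 / \<gamma>s) * P"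
          unfolding a_def b_def P_def using pos nn
          by (simp add: algebra_simps)
        then show ?thesis using P0 by (simp add: divide_le_eq)
      qed
      finally have r: "(a + b)\<^sup>2 / (P * S3) \<le> \<theta> + 1 / \<gamma>s" .
      have "T1 = (\<gamma>s * \<psi> * E / \<alpha>) * ((a + b)\<^sup>2 / (P * S3))" unfolding T1_def by (simp add: field_simps)
      also have "\<dots> \<le> (\<gamma>s * \<psi> * E / \<alpha>) * (\<theta> + 1 / \<gamma>s)"
        using r pos \<psi>0 nn by (intro mult_left_mono) auto
      finally show ?thesis by (simp add: algebra_simps)
    qed
    have T2b: "T2 \<le> 3 * \<theta> * (1 - \<nu>) * \<nu>E * E"
    proof -
      have r0: "(a + 3 * b) / S3 \<ge> 0" "(a + 3 * b) / S3 \<le> 3"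
        using a0 b0 S30 by (auto simp: S3_def divide_le_eq)
      have "T2 = ((1 - \<nu>) * \<nu>E * \<theta> * E - \<theta> * \<delta>M * M) * ((a + 3 * b) / S3)" unfolding T2_def by simp
      also have "\<dots> \<le> ((1 - \<nu>) * \<nu>E * \<theta> * E) * ((a + 3 * b) / S3)"
        using r0 pos nn by (intro mult_right_mono) auto
      also have "\<dots> \<le> ((1 - \<nu>) * \<nu>E * \<theta> * E) * 3"
        using r0 pos nn by (intro mult_left_mono) auto
      finally show ?thesis by (simp add: algebra_simps)
    qed
    have "max 0 G - \<delta>s * Ms = T1 + T2 + (\<beta>s / \<alpha>) * (a - b)" using False Geq by (simp add: b_def)
    also have "\<dots> \<le> \<gamma>s * \<psi> * (\<theta> + 1 / \<gamma>s) / \<alpha> * E + 3 * \<theta> * (1 - \<nu>) * \<nu>E * E + (\<beta>s * \<theta> / \<alpha>) * M - (\<beta>s / \<alpha>) * Ms"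
      using T1b T2b by (simp add: a_def b_def algebra_simps)
    also have "\<dots> \<le> C * (E + M) - min \<delta>s (\<beta>s / \<alpha>) * Ms"
    proof -
      have "C * (E + M) = \<gamma>s * \<psi> * (\<theta> + 1 / \<gamma>s) / \<alpha> * E + 3 * \<theta> * (1 - \<nu>) * \<nu>E * E + (\<beta>s * \<theta> / \<alpha>) * E
          + (\<gamma>s * \<psi> * (\<theta> + 1 / \<gamma>s) / \<alpha> + 3 * \<theta> * (1 - \<nu>) * \<nu>E) * M + (\<beta>s * \<theta> / \<alpha>) * M"
      proof -
        define k1 where "k1 = \<gamma>s * \<psi> * (\<theta> + 1 / \<gamma>s) / \<alpha>"
        define k2 where "k2 = 3 * \<theta> * (1 - \<nu>) * \<nu>E"
        define k3 where "k3 = \<beta>s * \<theta> / \<alpha>"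
        have "C = k1 + k2 + k3" unfolding Cdef k1_def k2_def k3_def by simp
        then have "C * (E + M) = k1 * E + k2 * E + k3 * E + (k1 + k2) * M + k3 * M" by (simp add: algebra_simps)
        then show ?thesis unfolding k1_def k2_def k3_def .
      qed
      moreover have "(\<beta>s * \<theta> / \<alpha>) * E \<ge> 0" using pos nn by simp
      moreover have "(\<gamma>s * \<psi> * (\<theta> + 1 / \<gamma>s) / \<alpha> + 3 * \<theta> * (1 - \<nu>) * \<nu>E) * M \<ge> 0"
        using C1 pos nn by (intro mult_nonneg_nonneg add_nonneg_nonneg) auto
      ultimately show ?thesis using dmin by linarith
    qed
    finally show ?thesis .
  qed
qed

lemma phi_lip:
  fixes a b a' b' :: real
  assumes "a \<ge> 0" "b \<ge> 0" "a' \<ge> 0" "b' \<ge> 0"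
  shows "\<bar>(a - b)\<^sup>2 / (a + b) - (a' - b')\<^sup>2 / (a' + b')\<bar> \<le> 9 * (\<bar>a - a'\<bar> + \<bar>b - b'\<bar>)"
proof -
  have phi0: "\<bar>(x - y)\<^sup>2 / (x + y)\<bar> \<le> x + y" if "x \<ge> 0" "y \<ge> 0" for x y :: real
  proof (cases "x + y = 0")
    case False
    then have "x + y > 0" using that by simp
    have "(x - y)\<^sup>2 \<le> (x + y)\<^sup>2" using that by (simp add: power2_eq_square algebra_simps)
    also have "\<dots> = (x + y) * (x + y)" by (simp add: power2_eq_square)
    finally have "(x - y)\<^sup>2 / (x + y) \<le> x + y" using \<open>x + y > 0\<close> by (simp add: divide_le_eq)
    moreover have "(x - y)\<^sup>2 / (x + y) \<ge> 0" using \<open>x + y > 0\<close> by simp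
    ultimately show ?thesis by simp
  qed simp
  show ?thesis
  proof (cases "a + b = 0 \<or> a' + b' = 0")
    case True
    then show ?thesis
    proof
      assume z: "a + b = 0"
      then have "a = 0" "b = 0" using assms by auto
      then show ?thesis using phi0[of a' b'] assms by simp
    next
      assume z: "a' + b' = 0"
      then have "a' = 0" "b' = 0" using assms by auto
      then show ?thesis using phi0[of a b] assms by simp
    qed
  next
    case False
    define s where "s = a + b"
    define s' where "s' = a' + b'"
    have sp: "s > 0" "s' > 0" using False assms by (auto simp: s_def s'_def)
    have phi_eq: "(x - y)\<^sup>2 / (x + y) = (x + y) - 4 * (x * (y / (x + y)))" if "x + y > 0" for x y :: real
      using that by (simp add: field_simps power2_eq_square)
    have q: "\<bar>b / s - b' / s'\<bar> \<le> (\<bar>a - a'\<bar> + \<bar>b - b'\<bar>) / s'"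
    proof -
      have "b / s - b' / s' = (b * a' - b' * a) / (s * s')" using sp by (simp add: field_simps s_def s'_def)
      also have "b * a' - b' * a = b * (a' - a) + a * (b - b')" by (simp add: algebra_simps)
      finally have e: "b / s - b' / s' = (b * (a' - a) + a * (b - b')) / (s * s')" .
      have "\<bar>b * (a' - a) + a * (b - b')\<bar> \<le> b * \<bar>a' - a\<bar> + a * \<bar>b - b'\<bar>"
        using assms by (metis abs_mult abs_of_nonneg abs_triangle_ineq)
      also have "\<dots> \<le> s * \<bar>a' - a\<bar> + s * \<bar>b - b'\<bar>"
        using assms by (intro add_mono mult_right_mono) (auto simp: s_def)
      finally have "\<bar>b * (a' - a) + a * (b - b')\<bar> \<le> s * (\<bar>a - a'\<bar> + \<bar>b - b'\<bar>)" by (simp add: algebra_simps abs_minus_commute)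
      then have "\<bar>b * (a' - a) + a * (b - b')\<bar> / (s * s') \<le> s * (\<bar>a - a'\<bar> + \<bar>b - b'\<bar>) / (s * s')"
        using sp by (intro divide_right_mono) auto
      then show ?thesis unfolding e using sp by (simp add: abs_divide abs_mult)
    qed
    have bs: "b / s \<le> 1" "b / s \<ge> 0" using assms sp by (auto simp: s_def)
    have a's: "a' \<le> s'" using assms by (simp add: s'_def)
    have "\<bar>a * (b / s) - a' * (b' / s')\<bar> = \<bar>(a - a') * (b / s) + a' * (b / s - b' / s')\<bar>"
    proof -
      define p where "p = b / s"
      define p' where "p' = b' / s'"
      have "a * p - a' * p' = (a - a') * p + a' * (p - p')" by (simp add: algebra_simps)
      then show ?thesis by (simp add: p_def p'_def)
    qed
    also have "\<dots> \<le> \<bar>a - a'\<bar> * (b / s) + a' * \<bar>b / s - b' / s'\<bar>"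
      using assms bs by (metis abs_mult abs_of_nonneg abs_triangle_ineq)
    also have "\<dots> \<le> \<bar>a - a'\<bar> * 1 + s' * ((\<bar>a - a'\<bar> + \<bar>b - b'\<bar>) / s')"
      using bs q a's assms by (intro add_mono mult_left_mono mult_mono) auto
    also have "\<dots> = 2 * \<bar>a - a'\<bar> + \<bar>b - b'\<bar>" using sp by simp
    finally have m: "\<bar>a * (b / s) - a' * (b' / s')\<bar> \<le> 2 * \<bar>a - a'\<bar> + \<bar>b - b'\<bar>" .
    define m where "m = a * (b / s) - a' * (b' / s')"
    have "(a - b)\<^sup>2 / (a + b) - (a' - b')\<^sup>2 / (a' + b') = (s - s') - 4 * m"
      using phi_eq[of a b] phi_eq[of a' b'] sp unfolding m_def by (simp add: s_def s'_def algebra_simps)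
    then have h1: "\<bar>(a - b)\<^sup>2 / (a + b) - (a' - b')\<^sup>2 / (a' + b')\<bar> \<le> \<bar>s - s'\<bar> + 4 * \<bar>m\<bar>"
      by arith
    have h2: "\<bar>s - s'\<bar> \<le> \<bar>a - a'\<bar> + \<bar>b - b'\<bar>" by (simp add: s_def s'_def abs_triangle_ineq4)
    show ?thesis using h1 h2 m abs_ge_zero[of "b - b'"] abs_ge_zero[of "a - a'"] unfolding m_def by (smt (verit))
  qed
qed


lemma fil_comp:
  assumes v: "v \<in> filippov_set D X x"
    and c: "\<And>\<eta>. \<eta> > 0 \<Longrightarrow> \<exists>e>0. \<forall>y\<in>ball x e \<inter> D. \<bar>X y $ i - c\<bar> \<le> \<eta>"
  shows "v $ i = c"
proof -
  have key: "\<bar>v $ i - c\<bar> \<le> \<eta>" if \<eta>: "\<eta> > 0" for \<eta>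
  proof -
    obtain e where e: "e > 0" "\<forall>y\<in>ball x e \<inter> D. \<bar>X y $ i - c\<bar> \<le> \<eta>" using c[OF \<eta>] by blast
    have "{} \<in> null_sets lebesgue" by simp
    then have vin: "v \<in> closure (convex hull (X ` ((ball x e \<inter> D) - {})))"
      using v e(1) unfolding filippov_set_def by blast
    define H where "H = {w :: real^4. \<bar>w $ i - c\<bar> \<le> \<eta>}"
    have Hc: "convex H" unfolding H_def convex_def
    proof (intro ballI allI impI)
      fix p q :: "real^4" and u w :: real
      assume p0: "p \<in> {w. \<bar>w $ i - c\<bar> \<le> \<eta>}" and q0: "q \<in> {w. \<bar>w $ i - c\<bar> \<le> \<eta>}"
        and u: "0 \<le> u" "0 \<le> w" "u + w = 1"
      have p: "\<bar>p $ i - c\<bar> \<le> \<eta>" and q: "\<bar>q $ i - c\<bar> \<le> \<eta>" using p0 q0 by auto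
      have cc: "c = u * c + w * c" using u(3) by (metis distrib_right mult_1)
      have "(u *\<^sub>R p + w *\<^sub>R q) $ i - c = u * (p $ i - c) + w * (q $ i - c)"
        by (subst cc) (simp add: algebra_simps)
      then have "\<bar>(u *\<^sub>R p + w *\<^sub>R q) $ i - c\<bar> \<le> \<bar>u * (p $ i - c)\<bar> + \<bar>w * (q $ i - c)\<bar>"
        by (simp add: abs_triangle_ineq)
      also have "\<dots> = u * \<bar>p $ i - c\<bar> + w * \<bar>q $ i - c\<bar>" using u by (simp add: abs_mult)
      also have "\<dots> \<le> u * \<eta> + w * \<eta>" using p q u by (intro add_mono mult_left_mono) auto
      also have "\<dots> = \<eta>" using u(3) by (metis distrib_right mult_1)
      finally show "u *\<^sub>R p + w *\<^sub>R q \<in> {w. \<bar>w $ i - c\<bar> \<le> \<eta>}" by simp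
    qed
    have Hcl: "closed H" unfolding H_def
      by (intro closed_Collect_le continuous_intros)
    have "X ` ((ball x e \<inter> D) - {}) \<subseteq> H" using e(2) by (auto simp: H_def)
    then have "convex hull (X ` ((ball x e \<inter> D) - {})) \<subseteq> H" using Hc by (simp add: hull_minimal)
    then have "closure (convex hull (X ` ((ball x e \<inter> D) - {}))) \<subseteq> H" using Hcl by (simp add: closure_minimal)
    then show ?thesis using vin by (auto simp: H_def)
  qed
  show ?thesis
  proof (rule ccontr)
    assume "v $ i \<noteq> c"
    then have "\<bar>v $ i - c\<bar> / 2 > 0" by simp
    then have "\<bar>v $ i - c\<bar> \<le> \<bar>v $ i - c\<bar> / 2" using key by blast
    then show False using \<open>\<bar>v $ i - c\<bar> / 2 > 0\<close> by simp
  qed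
qed

lemma cont_bound:
  assumes "isCont f x" "\<eta> > 0"
  shows "\<exists>e>0. \<forall>y\<in>ball x e \<inter> D. \<bar>f y - f x\<bar> \<le> (\<eta>::real)"
proof -
  obtain e where "e > 0" "\<forall>y. dist y x < e \<longrightarrow> dist (f y) (f x) < \<eta>"
    using assms unfolding continuous_at_eps_delta by blast
  then show ?thesis by (intro exI[of _ e]) (auto simp: dist_real_def dist_commute less_imp_le)
qed

lemma min_deriv0:
  fixes f :: "real \<Rightarrow> real"
  assumes "(f has_real_derivative d) (at t within {0..})" "t > 0" "\<And>s. s \<ge> 0 \<Longrightarrow> f s \<ge> 0" "f t = 0"
  shows "d = 0"
proof -
  have "(f has_real_derivative d) (at t within {0<..})"
    using assms(1) by (rule DERIV_subset) auto
  then have "(f has_real_derivative d) (at t)" using assms(2) by (subst (asm) at_within_open) auto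
  then show ?thesis
  proof (rule DERIV_local_min[of f d t t])
    show "0 < t" using assms(2) .
    show "\<forall>y. \<bar>t - y\<bar> < t \<longrightarrow> f t \<le> f y"
    proof (intro allI impI)
      fix y assume "\<bar>t - y\<bar> < t"
      then have "y \<ge> 0" by (cases "t \<ge> y") auto
      then show "f t \<le> f y" using assms(3)[of y] assms(4) by simp
    qed
  qed
qed

lemma comp_deriv:
  fixes z :: "real \<Rightarrow> real^'n"
  assumes "(z has_vector_derivative v) (at t within S)"
  shows "((\<lambda>t. z t $ i) has_real_derivative v $ i) (at t within S)"
  using bounded_linear.has_vector_derivative[OF bounded_linear_vec_nth assms]
  by (simp add: has_real_derivative_iff_has_vector_derivative)

locale sys =
  fixes \<beta>E \<nu>E \<delta>E \<delta>M \<delta>F \<delta>s K \<nu> \<gamma>s \<theta> \<alpha> \<beta>s :: real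
  assumes pos: "\<beta>E > 0" "\<nu>E > 0" "\<delta>E > 0" "\<delta>M > 0" "\<delta>F > 0" "\<delta>s > 0" "K > 0"
    "0 < \<nu>" "\<nu> < 1" "0 < \<gamma>s" "\<gamma>s \<le> 1" "\<delta>s \<ge> \<delta>M" "\<theta> > 0"
    and Rlt: "Rtheta \<beta>E \<nu> \<nu>E \<delta>E \<delta>F \<gamma>s \<theta> < 1" and pos2: "\<alpha> > 0" "\<beta>s > 0"
begin

abbreviation "X \<equiv> Xcl \<beta>E \<nu>E \<delta>E \<delta>M \<delta>F \<delta>s K \<nu> \<gamma>s \<theta> \<alpha> \<beta>s"
abbreviation "\<psi> \<equiv> psi \<beta>E \<nu> \<nu>E \<delta>E \<delta>F \<gamma>s \<theta>"
abbreviation "R \<equiv> Rtheta \<beta>E \<nu> \<nu>E \<delta>E \<delta>F \<gamma>s \<theta>"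
abbreviation "G \<equiv> Gfb \<beta>E \<nu>E \<delta>E \<delta>M \<delta>F \<delta>s \<nu> \<gamma>s \<theta> \<alpha> \<beta>s"

definition Gform :: "real^4 \<Rightarrow> real" where
  "Gform y = \<gamma>s * \<psi> * y$1 * (\<theta> * y$2 + y$4)\<^sup>2 / (\<alpha> * (y$2 + \<gamma>s * y$4) * (3 * \<theta> * y$2 + y$4))
        + ((1 - \<nu>) * \<nu>E * \<theta> * y$1 - \<theta> * \<delta>M * y$2) * (\<theta> * y$2 + 3 * y$4) / (3 * \<theta> * y$2 + y$4)
        + \<delta>s * y$4 + (\<beta>s / \<alpha>) * (\<theta> * y$2 - y$4)"

lemma G_eq: "y$2 + y$4 \<noteq> 0 \<Longrightarrow> G y = Gform y"
  unfolding Gfb_def Gform_def Let_def by simp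

lemma G_zero: "y$2 + y$4 = 0 \<Longrightarrow> G y = 0"
  unfolding Gfb_def Let_def by simp

lemma X1: "X y $ 1 = \<beta>E * y$3 * (1 - y$1 / K) - (\<nu>E + \<delta>E) * y$1"
  by (simp add: Xcl_def Let_def vec4_def)
lemma X2: "X y $ 2 = (1 - \<nu>) * \<nu>E * y$1 - \<delta>M * y$2"
  by (simp add: Xcl_def Let_def vec4_def)
lemma X3: "X y $ 3 = \<nu> * \<nu>E * y$1 * (y$2 / (y$2 + \<gamma>s * y$4)) - \<delta>F * y$3"
  by (simp add: Xcl_def Let_def vec4_def)
lemma X4: "X y $ 4 = max 0 (G y) - \<delta>s * y$4"
  by (simp add: Xcl_def Let_def vec4_def ufb_def)

lemma psi_nonneg: "\<psi> \<ge> 0"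
proof -
  have "1 - R > 0" using Rlt by simp
  then show ?thesis unfolding psi_def using pos by (intro divide_nonneg_pos mult_pos_pos) (auto simp: add_pos_pos)
qed

lemma Dprime_nn: "y \<in> Dprime \<Longrightarrow> y $ i \<ge> 0" by (simp add: Dprime_def)

lemma frac01: assumes "y \<in> Dprime" shows "y$2 / (y$2 + \<gamma>s * y$4) \<ge> 0" "y$2 / (y$2 + \<gamma>s * y$4) \<le> 1"
proof -
  have a: "y$2 \<ge> 0" "y$4 \<ge> 0" using assms by (auto simp: Dprime_def)
  then have b: "\<gamma>s * y$4 \<ge> 0" using pos by simp
  show "y$2 / (y$2 + \<gamma>s * y$4) \<ge> 0" using a b by simp
  show "y$2 / (y$2 + \<gamma>s * y$4) \<le> 1"
  proof (cases "y$2 + \<gamma>s * y$4 = 0")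
    case False
    then have "y$2 + \<gamma>s * y$4 > 0" using a b by simp
    then show ?thesis using b by (simp add: divide_le_eq)
  qed simp
qed

lemma cont1: "isCont (\<lambda>y. X y $ 1) x"
  unfolding X1 by (intro continuous_intros) (use pos in auto)
lemma cont2: "isCont (\<lambda>y. X y $ 2) x"
  unfolding X2 by (intro continuous_intros)

lemma cont34:
  assumes x: "x \<in> Dprime" "x$2 + x$4 > 0"
  shows "isCont (\<lambda>y. X y $ 3) x" "isCont (\<lambda>y. X y $ 4) x"
proof -
  have a: "x$2 \<ge> 0" "x$4 \<ge> 0" using x by (auto simp: Dprime_def)
  have d1: "x$2 + \<gamma>s * x$4 \<noteq> 0"
  proof (cases "x$2 > 0")
    case True
    have "\<gamma>s * x$4 \<ge> 0" using a pos by simp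
    then show ?thesis using True by linarith
  next
    case False then have "x$4 > 0" using a x(2) by simp
    then have "\<gamma>s * x$4 > 0" using pos by simp
    then show ?thesis using a by linarith
  qed
  have d2: "3 * \<theta> * x$2 + x$4 \<noteq> 0"
  proof (cases "x$2 > 0")
    case True
    have "3 * \<theta> * x$2 > 0" using True pos by simp
    then show ?thesis using a by linarith
  next
    case False then have "x$4 > 0" using a x(2) by simp
    have "3 * \<theta> * x$2 \<ge> 0" using a pos by simp
    then show ?thesis using \<open>x$4 > 0\<close> by linarith
  qed
  show "isCont (\<lambda>y. X y $ 3) x" unfolding X3
    by (intro continuous_intros) (use d1 in auto)
  have ev: "eventually (\<lambda>y. y$2 + y$4 \<noteq> 0) (nhds x)"
  proof -
    have "isCont (\<lambda>y::real^4. y$2 + y$4) x" by (intro continuous_intros)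
    then have "((\<lambda>y::real^4. y$2 + y$4) \<longlongrightarrow> x$2 + x$4) (at x)"
      by (simp add: isCont_def)
    then have "eventually (\<lambda>y. y$2 + y$4 > 0) (at x)"
      using x(2) by (rule order_tendstoD)
    then have "eventually (\<lambda>y. y$2 + y$4 > 0) (nhds x)"
      using x(2) by (simp add: eventually_nhds_conv_at)
    then show ?thesis by eventually_elim auto
  qed
  have "isCont (\<lambda>y. max 0 (Gform y) - \<delta>s * y$4) x"
    unfolding Gform_def using pos2 d1 d2 by (intro continuous_intros) auto
  moreover have "eventually (\<lambda>y. X y $ 4 = max 0 (Gform y) - \<delta>s * y$4) (nhds x)"
    using ev by eventually_elim (simp add: X4 G_eq)
  ultimately show "isCont (\<lambda>y. X y $ 4) x" by (subst isCont_cong) auto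
qed

lemma cont3_E0:
  assumes x: "x \<in> Dprime" "x$1 = 0" and \<eta>: "\<eta> > 0"
  shows "\<exists>e>0. \<forall>y\<in>ball x e \<inter> Dprime. \<bar>X y $ 3 - X x $ 3\<bar> \<le> \<eta>"
proof -
  define L where "L = \<nu> * \<nu>E + \<delta>F"
  have "\<nu> * \<nu>E > 0" using pos by simp
  then have L: "L > 0" using pos(5) unfolding L_def by linarith
  show ?thesis
  proof (intro exI[of _ "\<eta> / L"] conjI ballI)
    show "\<eta> / L > 0" using \<eta> L by simp
    fix y assume y: "y \<in> ball x (\<eta> / L) \<inter> Dprime"
    have dy: "norm (y - x) < \<eta> / L" using y by (auto simp: dist_norm norm_minus_commute)
    have c1: "\<bar>y$1\<bar> \<le> norm (y - x)" using component_le_norm_cart[of "y - x" 1] x by simp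
    have c3: "\<bar>y$3 - x$3\<bar> \<le> norm (y - x)" using component_le_norm_cart[of "y - x" 3] by simp
    have y1: "y$1 \<ge> 0" using y by (auto simp: Dprime_def)
    have fr: "\<bar>\<nu> * \<nu>E * y$1 * (y$2 / (y$2 + \<gamma>s * y$4))\<bar> \<le> \<nu> * \<nu>E * y$1"
    proof -
      have A: "\<nu> * \<nu>E * y$1 \<ge> 0" using pos y1 by simp
      have f: "y$2 / (y$2 + \<gamma>s * y$4) \<ge> 0" "y$2 / (y$2 + \<gamma>s * y$4) \<le> 1" using frac01[of y] y by auto
      have "\<nu> * \<nu>E * y$1 * (y$2 / (y$2 + \<gamma>s * y$4)) \<le> \<nu> * \<nu>E * y$1" using mult_left_le[OF f(2) A] .
      moreover have "\<nu> * \<nu>E * y$1 * (y$2 / (y$2 + \<gamma>s * y$4)) \<ge> 0" using mult_nonneg_nonneg[OF A f(1)] .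
      ultimately show ?thesis by (simp only: abs_of_nonneg)
    qed
    define A3 where "A3 = \<nu> * \<nu>E * y$1 * (y$2 / (y$2 + \<gamma>s * y$4))"
    define B3 where "B3 = \<delta>F * (y$3 - x$3)"
    have "X y $ 3 - X x $ 3 = A3 - B3"
      unfolding X3 A3_def B3_def using x by (simp add: algebra_simps)
    then have "\<bar>X y $ 3 - X x $ 3\<bar> \<le> \<bar>A3\<bar> + \<bar>B3\<bar>" by (simp add: abs_triangle_ineq4)
    moreover have "\<bar>B3\<bar> = \<delta>F * \<bar>y$3 - x$3\<bar>" using pos by (simp add: abs_mult B3_def)
    ultimately have "\<bar>X y $ 3 - X x $ 3\<bar> \<le> \<nu> * \<nu>E * y$1 + \<delta>F * \<bar>y$3 - x$3\<bar>" using fr unfolding A3_def by linarith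
    also have "\<dots> \<le> \<nu> * \<nu>E * norm (y - x) + \<delta>F * norm (y - x)"
      using c1 c3 pos y1 by (intro add_mono mult_left_mono) auto
    also have "\<dots> = L * norm (y - x)" by (simp add: L_def algebra_simps)
    also have "\<dots> \<le> \<eta>" using dy L by (simp add: field_simps)
    finally show "\<bar>X y $ 3 - X x $ 3\<bar> \<le> \<eta>" .
  qed
qed

end


context sys begin

lemma deriv_eq:
  assumes t: "t > 0" and zD: "\<And>s. s \<ge> 0 \<Longrightarrow> z s \<in> Dprime"
    and d: "(z has_vector_derivative v) (at t within {0..})" and f: "v \<in> filippov_set Dprime X (z t)"
  shows "v = X (z t)"
proof -
  define x where "x = z t"
  have xD: "x \<in> Dprime" using zD t by (simp add: x_def)
  have xnn: "\<And>i. x $ i \<ge> 0" using xD by (simp add: Dprime_def)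
  have fx: "v \<in> filippov_set Dprime X x" using f by (simp add: x_def)
  have v1: "v $ 1 = X x $ 1" by (rule fil_comp[OF fx cont_bound[OF cont1]])
  have v2: "v $ 2 = X x $ 2" by (rule fil_comp[OF fx cont_bound[OF cont2]])
  have dc: "\<And>i. ((\<lambda>s. z s $ i) has_real_derivative v $ i) (at t within {0..})"
    using d by (rule comp_deriv)
  have znn: "\<And>i s. s \<ge> 0 \<Longrightarrow> z s $ i \<ge> 0" using zD by (simp add: Dprime_def)
  have v34: "v $ 3 = X x $ 3 \<and> v $ 4 = X x $ 4"
  proof (cases "x$2 + x$4 > 0")
    case True
    show ?thesis using fil_comp[OF fx cont_bound[OF cont34(1)[OF xD True]]] fil_comp[OF fx cont_bound[OF cont34(2)[OF xD True]]]
      by simp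
  next
    case False
    then have x24: "x$2 = 0" "x$4 = 0" using xnn[of 2] xnn[of 4] by auto
    have "v $ 2 = 0" by (rule min_deriv0[OF dc assms(1)]) (use znn x24 x_def in auto)
    then have "(1 - \<nu>) * \<nu>E * x$1 = 0" using v2 x24 by (simp add: X2)
    then have x1: "x$1 = 0" using pos by simp
    have v3: "v $ 3 = X x $ 3" by (rule fil_comp[OF fx cont3_E0[OF xD x1]])
    have "v $ 4 = 0" by (rule min_deriv0[OF dc assms(1)]) (use znn x24 x_def in auto)
    moreover have "X x $ 4 = 0" using x24 by (simp add: X4 G_zero)
    ultimately show ?thesis using v3 by simp
  qed
  have "\<forall>i. v $ i = X x $ i"
  proof
    fix i :: 4
    show "v $ i = X x $ i" using exhaust_4[of i] v1 v2 v34 by auto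
  qed
  then show ?thesis by (simp add: vec_eq_iff x_def)
qed


definition "cc = 2 / (1 - R)"
definition "cc' = cc * \<beta>E / \<delta>F"
definition "\<kappa> = 2 * (\<nu>E + \<delta>E)"
definition "CV = cc + cc' + 9 * \<alpha> * (\<theta> + 1)"
definition Vf :: "real^4 \<Rightarrow> real" where
  "Vf y = cc * y$1 + cc' * y$3 + \<alpha> * ((\<theta> * y$2 - y$4)\<^sup>2 / (\<theta> * y$2 + y$4))"

lemma cc_pos: "cc > 0" "cc' > 0" "\<kappa> > 0"
proof -
  have "1 - R > 0" using Rlt by simp
  then show "cc > 0" by (simp add: cc_def)
  then show "cc' > 0" using pos by (simp add: cc'_def)
  show "\<kappa> > 0" using pos by (simp add: \<kappa>_def)
qed

lemma CV_pos: "CV > 0" using cc_pos pos pos2 by (simp add: CV_def add_pos_pos)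

lemma phi_nn: "a \<ge> 0 \<Longrightarrow> b \<ge> 0 \<Longrightarrow> (a - b)\<^sup>2 / (a + b) \<ge> (0::real)" by simp

lemma phi_le: fixes a b :: real assumes "a \<ge> 0" "b \<ge> 0" shows "(a - b)\<^sup>2 / (a + b) \<le> 9 * (a + b)"
  using phi_lip[of a b 0 0] phi_nn[OF assms] assms by simp

lemma V_ge: assumes "y \<in> Dprime" shows "cc * y$1 \<le> Vf y" "cc' * y$3 \<le> Vf y" "0 \<le> Vf y"
proof -
  have nn: "\<And>i. y $ i \<ge> 0" using assms by (simp add: Dprime_def)
  have p: "\<alpha> * ((\<theta> * y$2 - y$4)\<^sup>2 / (\<theta> * y$2 + y$4)) \<ge> 0"
    using phi_nn[of "\<theta> * y$2" "y$4"] nn pos pos2 by simp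
  have a: "cc * y$1 \<ge> 0" "cc' * y$3 \<ge> 0" using cc_pos nn by simp_all
  show "cc * y$1 \<le> Vf y" "cc' * y$3 \<le> Vf y" "0 \<le> Vf y" using p a by (simp_all add: Vf_def)
qed

lemma V_le: assumes "y \<in> Dprime" shows "Vf y \<le> CV * (y$1 + y$2 + y$3 + y$4)"
proof -
  have nn: "\<And>i. y $ i \<ge> 0" using assms by (simp add: Dprime_def)
  have "\<alpha> * ((\<theta> * y$2 - y$4)\<^sup>2 / (\<theta> * y$2 + y$4)) \<le> \<alpha> * (9 * (\<theta> * y$2 + y$4))"
    using phi_le[of "\<theta> * y$2" "y$4"] nn pos pos2 by (intro mult_left_mono) auto
  then have "Vf y \<le> cc * y$1 + cc' * y$3 + 9 * \<alpha> * \<theta> * y$2 + 9 * \<alpha> * y$4"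
    by (simp add: Vf_def algebra_simps)
  also have "\<dots> \<le> CV * y$1 + CV * y$3 + CV * y$2 + CV * y$4"
  proof -
    have "cc \<le> CV" "cc' \<le> CV" "9 * \<alpha> * \<theta> \<le> CV" "9 * \<alpha> \<le> CV"
      using cc_pos pos pos2 by (auto simp: CV_def algebra_simps)
    then have "cc * y$1 \<le> CV * y$1" "cc' * y$3 \<le> CV * y$3" "9 * \<alpha> * \<theta> * y$2 \<le> CV * y$2" "9 * \<alpha> * y$4 \<le> CV * y$4"
      using nn by (auto intro: mult_right_mono)
    then show ?thesis by linarith
  qed
  finally show ?thesis by (simp add: algebra_simps)
qed

lemma V_lip: assumes "y \<in> Dprime" "y' \<in> Dprime"
  shows "\<bar>Vf y - Vf y'\<bar> \<le> CV * (\<bar>y$1 - y'$1\<bar> + \<bar>y$2 - y'$2\<bar> + \<bar>y$3 - y'$3\<bar> + \<bar>y$4 - y'$4\<bar>)"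
proof -
  have nn: "\<And>i. y $ i \<ge> 0" "\<And>i. y' $ i \<ge> 0" using assms by (simp_all add: Dprime_def)
  have ph: "\<bar>(\<theta> * y$2 - y$4)\<^sup>2 / (\<theta> * y$2 + y$4) - (\<theta> * y'$2 - y'$4)\<^sup>2 / (\<theta> * y'$2 + y'$4)\<bar>
      \<le> 9 * (\<bar>\<theta> * y$2 - \<theta> * y'$2\<bar> + \<bar>y$4 - y'$4\<bar>)"
    by (rule phi_lip) (use nn pos in auto)
  have t2: "\<bar>\<theta> * y$2 - \<theta> * y'$2\<bar> = \<theta> * \<bar>y$2 - y'$2\<bar>"
    using pos(13) by (simp add: abs_mult right_diff_distrib[symmetric])
  define P where "P = (\<theta> * y$2 - y$4)\<^sup>2 / (\<theta> * y$2 + y$4)"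
  define P' where "P' = (\<theta> * y'$2 - y'$4)\<^sup>2 / (\<theta> * y'$2 + y'$4)"
  have "Vf y - Vf y' = cc * (y$1 - y'$1) + cc' * (y$3 - y'$3) + \<alpha> * (P - P')"
    by (simp add: Vf_def P_def P'_def algebra_simps)
  moreover have "\<bar>cc * (y$1 - y'$1) + cc' * (y$3 - y'$3) + \<alpha> * (P - P')\<bar> \<le> \<bar>cc * (y$1 - y'$1) + cc' * (y$3 - y'$3)\<bar> + \<bar>\<alpha> * (P - P')\<bar>"
    by (rule abs_triangle_ineq)
  moreover have "\<bar>cc * (y$1 - y'$1) + cc' * (y$3 - y'$3)\<bar> \<le> \<bar>cc * (y$1 - y'$1)\<bar> + \<bar>cc' * (y$3 - y'$3)\<bar>"
    by (rule abs_triangle_ineq)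
  ultimately have "\<bar>Vf y - Vf y'\<bar> \<le> \<bar>cc * (y$1 - y'$1)\<bar> + \<bar>cc' * (y$3 - y'$3)\<bar> + \<bar>\<alpha> * (P - P')\<bar>"
    by linarith
  also have "\<dots> = cc * \<bar>y$1 - y'$1\<bar> + cc' * \<bar>y$3 - y'$3\<bar> + \<alpha> * \<bar>P - P'\<bar>"
    using cc_pos pos2 by (simp add: abs_mult)
  also have "\<dots> \<le> cc * \<bar>y$1 - y'$1\<bar> + cc' * \<bar>y$3 - y'$3\<bar> + \<alpha> * (9 * (\<theta> * \<bar>y$2 - y'$2\<bar> + \<bar>y$4 - y'$4\<bar>))"
    using ph t2 pos2 cc_pos unfolding P_def P'_def by (intro add_mono mult_left_mono) auto
  also have "\<dots> \<le> CV * \<bar>y$1 - y'$1\<bar> + CV * \<bar>y$3 - y'$3\<bar> + CV * \<bar>y$2 - y'$2\<bar> + CV * \<bar>y$4 - y'$4\<bar>"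
  proof -
    have "cc \<le> CV" "cc' \<le> CV" "9 * \<alpha> * \<theta> \<le> CV" "9 * \<alpha> \<le> CV"
      using cc_pos pos pos2 by (auto simp: CV_def algebra_simps)
    then have "cc * \<bar>y$1 - y'$1\<bar> \<le> CV * \<bar>y$1 - y'$1\<bar>" "cc' * \<bar>y$3 - y'$3\<bar> \<le> CV * \<bar>y$3 - y'$3\<bar>"
      "(9 * \<alpha> * \<theta>) * \<bar>y$2 - y'$2\<bar> \<le> CV * \<bar>y$2 - y'$2\<bar>" "(9 * \<alpha>) * \<bar>y$4 - y'$4\<bar> \<le> CV * \<bar>y$4 - y'$4\<bar>"
      by (auto intro: mult_right_mono)
    then show ?thesis by (simp add: algebra_simps)
  qed
  finally show ?thesis by (simp add: algebra_simps)
qed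

lemma phi_deriv_id:
  fixes A B P Q :: real
  shows "(of_nat 2 * ((P - Q) * A ^ (2 - Suc 0)) * B - A\<^sup>2 * (P + Q)) / (B * B) = A * ((2*B - A) * P - (2*B + A) * Q) / B\<^sup>2"
  by (simp add: power2_eq_square algebra_simps)


definition "Cms = \<gamma>s * \<psi> * (\<theta> + 1 / \<gamma>s) / \<alpha> + 3 * \<theta> * (1 - \<nu>) * \<nu>E + \<beta>s * \<theta> / \<alpha>"
definition "dms = min \<delta>s (\<beta>s / \<alpha>)"

lemma Cms_nn: "Cms \<ge> 0"
proof -
  have "\<gamma>s * \<psi> * (\<theta> + 1 / \<gamma>s) / \<alpha> \<ge> 0" using psi_nonneg pos pos2 by simp
  moreover have "3 * \<theta> * (1 - \<nu>) * \<nu>E \<ge> 0" "\<beta>s * \<theta> / \<alpha> \<ge> 0" using pos pos2 by simp_all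
  ultimately show ?thesis unfolding Cms_def by linarith
qed

lemma dms_pos: "dms > 0" using pos pos2 by (simp add: dms_def)

lemma X4_bound: assumes "y \<in> Dprime" shows "X y $ 4 \<le> Cms * (y$1 + y$2) - dms * y$4"
proof -
  have nn: "\<And>i. y $ i \<ge> 0" using assms by (simp add: Dprime_def)
  show ?thesis
  proof (cases "y$2 + y$4 > 0")
    case True
    show ?thesis unfolding X4 dms_def
      by (rule ms_alg[where \<nu>E=\<nu>E and \<delta>M=\<delta>M and \<delta>s=\<delta>s
          and \<nu>=\<nu> and \<gamma>s=\<gamma>s and \<theta>=\<theta> and \<alpha>=\<alpha> and \<beta>s=\<beta>s and \<psi>=\<psi>])
        (use pos pos2 psi_nonneg nn True G_eq[of y] in \<open>auto simp: Gform_def Cms_def\<close>)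
  next
    case False
    then have "y$2 = 0" "y$4 = 0" using nn[of 2] nn[of 4] by auto
    then show ?thesis using Cms_nn nn[of 1] by (simp add: X4 G_zero)
  qed
qed

lemma X3_bound: assumes "y \<in> Dprime" shows "X y $ 3 \<le> \<nu> * \<nu>E * y$1 - \<delta>F * y$3"
proof -
  have "y$1 \<ge> 0" using assms by (simp add: Dprime_def)
  then have "\<nu> * \<nu>E * y$1 \<ge> 0" using pos by simp
  then have "\<nu> * \<nu>E * y$1 * (y$2 / (y$2 + \<gamma>s * y$4)) \<le> \<nu> * \<nu>E * y$1"
    using mult_left_le[OF frac01(2)[OF assms]] by blast
  then show ?thesis by (simp add: X3)
qed

lemma X1_lower: assumes "y \<in> Dprime" "y$1 \<le> Eb" "y$3 \<le> Fb"
  shows "X y $ 1 \<ge> - (\<beta>E * Fb * Eb / K + (\<nu>E + \<delta>E) * Eb)"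
proof -
  have nn: "y$1 \<ge> 0" "y$3 \<ge> 0" using assms by (simp_all add: Dprime_def)
  have "\<beta>E * y$3 * (1 - y$1 / K) \<ge> - (\<beta>E * y$3 * y$1 / K)"
    using nn pos by (simp add: algebra_simps)
  moreover have "\<beta>E * y$3 * y$1 / K \<le> \<beta>E * Fb * Eb / K"
    using nn pos assms by (intro divide_right_mono mult_mono) auto
  moreover have "(\<nu>E + \<delta>E) * y$1 \<le> (\<nu>E + \<delta>E) * Eb"
    using assms pos by (intro mult_left_mono) auto
  ultimately show ?thesis by (simp add: X1)
qed

definition "e0 = 4 * CV / cc"
definition "f0 = 4 * CV / cc'"
definition "m0 = (1 - \<nu>) * \<nu>E * e0 / \<delta>M + 1"
definition "s0 = Cms * (e0 + m0) / dms + 1"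
definition "Kc = e0 + f0 + m0 + s0"

lemma consts_nn: "e0 \<ge> 0" "f0 \<ge> 0" "m0 \<ge> 0" "s0 \<ge> 0" "Kc > 0"
proof -
  show e: "e0 \<ge> 0" using CV_pos cc_pos by (simp add: e0_def)
  show f: "f0 \<ge> 0" using CV_pos cc_pos by (simp add: f0_def)
  have "(1 - \<nu>) * \<nu>E * e0 / \<delta>M \<ge> 0" using e pos by simp
  then show m: "m0 \<ge> 0" by (simp add: m0_def)
  have "Cms * (e0 + m0) / dms \<ge> 0" using e m Cms_nn dms_pos by simp
  then show s: "s0 \<ge> 0" by (simp add: s0_def)
  have "s0 > 0" using \<open>Cms * (e0 + m0) / dms \<ge> 0\<close> by (simp add: s0_def)
  then show "Kc > 0" using e f m by (simp add: Kc_def)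
qed

lemma UNIV_4: "(UNIV :: 4 set) = {1, 2, 3, 4}" using exhaust_4 by auto

lemma sum4: "(\<Sum>i\<in>UNIV. f (i::4)) = f 1 + f 2 + f 3 + (f 4::real)"
  unfolding UNIV_4 by (simp add: sum.insert_remove)
end

locale sol = sys +
  fixes z :: "real \<Rightarrow> real^4"
  assumes sol: "filippov_solution Dprime X z"
begin

lemma zD: "t \<ge> 0 \<Longrightarrow> z t \<in> Dprime"
  using sol by (simp add: filippov_solution_def)

lemma znn: "t \<ge> 0 \<Longrightarrow> z t $ i \<ge> 0"
  using zD by (simp add: Dprime_def)

lemma zlip_at:
  assumes "t \<ge> 0"
  shows "\<exists>T L. open T \<and> t \<in> T \<and> (\<forall>s\<in>{0..}\<inter>T. \<forall>i. \<bar>z s $ i - z t $ i\<bar> \<le> L * \<bar>s - t\<bar>)"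
proof -
  obtain e L where e: "e > 0" "L-lipschitz_on ({0..} \<inter> cball t e) z"
    using sol assms unfolding filippov_solution_def by blast
  show ?thesis
  proof (intro exI[of _ "ball t e"] exI[of _ L] conjI ballI allI)
    show "open (ball t e)" "t \<in> ball t e" using e by auto
    fix s i assume s: "s \<in> {0..} \<inter> ball t e"
    have "dist (z s) (z t) \<le> L * dist s t"
      by (rule lipschitz_onD[OF e(2)]) (use s assms e in auto)
    moreover have "\<bar>z s $ i - z t $ i\<bar> \<le> dist (z s) (z t)"
      using component_le_norm_cart[of "z s - z t" i] by (simp add: dist_norm)
    ultimately show "\<bar>z s $ i - z t $ i\<bar> \<le> L * \<bar>s - t\<bar>" by (simp add: dist_real_def)
  qed
qed

lemma plip_comp: "plip (\<lambda>t. z t $ i) {0..}"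
  unfolding plip_def
proof
  fix t :: real assume "t \<in> {0..}"
  then have "\<exists>T L. open T \<and> t \<in> T \<and> (\<forall>s\<in>{0..}\<inter>T. \<forall>i. \<bar>z s $ i - z t $ i\<bar> \<le> L * \<bar>s - t\<bar>)"
    using zlip_at by simp
  then obtain T L where "open T" "t \<in> T" "\<forall>s\<in>{0..}\<inter>T. \<forall>i. \<bar>z s $ i - z t $ i\<bar> \<le> L * \<bar>s - t\<bar>"
    by blast
  then show "\<exists>T B. open T \<and> t \<in> T \<and> (\<forall>y\<in>{0..} \<inter> T. \<bar>z y $ i - z t $ i\<bar> \<le> B * \<bar>y - t\<bar>)" by blast
qed

lemma derivX: "\<exists>N. negligible N \<and> (\<forall>t. t \<ge> 0 \<longrightarrow> t \<notin> N \<longrightarrow> (z has_vector_derivative X (z t)) (at t within {0..}))"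
proof -
  have "AE t in lborel. 0 \<le> t \<longrightarrow> (\<exists>v. (z has_vector_derivative v) (at t within {0..}) \<and> v \<in> filippov_set Dprime X (z t))"
    using sol by (simp add: filippov_solution_def)
  then obtain N0 where N0: "N0 \<in> null_sets lborel"
    and P: "\<And>t. t \<in> space lborel - N0 \<Longrightarrow> 0 \<le> t \<longrightarrow> (\<exists>v. (z has_vector_derivative v) (at t within {0..}) \<and> v \<in> filippov_set Dprime X (z t))"
    by (rule AE_E3) blast
  have "negligible N0" using null_sets_completionI[OF N0] by (simp add: negligible_iff_null_sets)
  then have neg: "negligible (insert 0 N0)" by simp
  show ?thesis
  proof (intro exI[of _ "insert 0 N0"] conjI allI impI neg)
    fix t :: real assume t: "t \<ge> 0" "t \<notin> insert 0 N0"
    then obtain v where v: "(z has_vector_derivative v) (at t within {0..})" "v \<in> filippov_set Dprime X (z t)"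
      using P[of t] by auto
    have "v = X (z t)" using deriv_eq[OF _ _ v] zD t by auto
    then show "(z has_vector_derivative X (z t)) (at t within {0..})" using v by simp
  qed
qed


lemma plip_V: "plip (\<lambda>t. Vf (z t)) {0..}"
  unfolding plip_def
proof
  fix t :: real assume "t \<in> {0..}"
  then have "\<exists>T L. open T \<and> t \<in> T \<and> (\<forall>s\<in>{0..}\<inter>T. \<forall>i. \<bar>z s $ i - z t $ i\<bar> \<le> L * \<bar>s - t\<bar>)"
    using zlip_at by simp
  then obtain T L where T: "open T" "t \<in> T" "\<forall>s\<in>{0..}\<inter>T. \<forall>i. \<bar>z s $ i - z t $ i\<bar> \<le> L * \<bar>s - t\<bar>"
    by blast
  show "\<exists>T B. open T \<and> t \<in> T \<and> (\<forall>y\<in>{0..} \<inter> T. \<bar>Vf (z y) - Vf (z t)\<bar> \<le> B * \<bar>y - t\<bar>)"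
  proof (intro exI[of _ T] exI[of _ "CV * (4 * L)"] conjI ballI T(1,2))
    fix s assume s: "s \<in> {0..} \<inter> T"
    have "\<bar>Vf (z s) - Vf (z t)\<bar> \<le> CV * (\<bar>z s$1 - z t$1\<bar> + \<bar>z s$2 - z t$2\<bar> + \<bar>z s$3 - z t$3\<bar> + \<bar>z s$4 - z t$4\<bar>)"
      by (rule V_lip) (use s \<open>t \<in> {0..}\<close> zD in auto)
    also have "\<dots> \<le> CV * (4 * L * \<bar>s - t\<bar>)"
    proof (rule mult_left_mono)
      have "\<bar>z s$1 - z t$1\<bar> \<le> L * \<bar>s - t\<bar>" "\<bar>z s$2 - z t$2\<bar> \<le> L * \<bar>s - t\<bar>"
        "\<bar>z s$3 - z t$3\<bar> \<le> L * \<bar>s - t\<bar>" "\<bar>z s$4 - z t$4\<bar> \<le> L * \<bar>s - t\<bar>"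
        using T(3) s by blast+
      then show "\<bar>z s$1 - z t$1\<bar> + \<bar>z s$2 - z t$2\<bar> + \<bar>z s$3 - z t$3\<bar> + \<bar>z s$4 - z t$4\<bar> \<le> 4 * L * \<bar>s - t\<bar>"
        by linarith
      show "0 \<le> CV" using CV_pos by simp
    qed
    finally show "\<bar>Vf (z s) - Vf (z t)\<bar> \<le> CV * (4 * L) * \<bar>s - t\<bar>" by (simp add: algebra_simps)
  qed
qed


lemma V_deriv:
  assumes t: "t > 0" and dz: "(z has_vector_derivative X (z t)) (at t within {0..})"
  shows "\<exists>d. ((\<lambda>s. Vf (z s)) has_real_derivative d) (at t within {0..}) \<and> d \<le> - \<kappa> * z t $ 1"
proof -
  define x where "x = z t"
  have dc: "\<And>i. ((\<lambda>s. z s $ i) has_real_derivative X x $ i) (at t within {0..})"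
    using comp_deriv[OF dz] by (simp add: x_def)
  have xnn: "\<And>i. x $ i \<ge> 0" using znn t by (simp add: x_def)
  have xD: "x \<in> Dprime" using zD t by (simp add: x_def)
  show ?thesis
  proof (cases "x$2 + x$4 > 0")
    case True
    have B0: "\<theta> * x$2 + x$4 > 0"
    proof (cases "x$2 > 0")
      case True then show ?thesis using xnn[of 4] pos(13) by (simp add: add_pos_nonneg)
    next
      case False then have "x$4 > 0" using \<open>x$2 + x$4 > 0\<close> xnn[of 2] by simp
      then show ?thesis using xnn[of 2] pos(13) by (simp add: add_nonneg_pos)
    qed
    have dA: "((\<lambda>s. \<theta> * z s$2 - z s$4) has_real_derivative \<theta> * X x$2 - X x$4) (at t within {0..})"
      using dc[of 2] dc[of 4] by (auto intro!: derivative_eq_intros)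
    have dB: "((\<lambda>s. \<theta> * z s$2 + z s$4) has_real_derivative \<theta> * X x$2 + X x$4) (at t within {0..})"
      using dc[of 2] dc[of 4] by (auto intro!: derivative_eq_intros)
    define A where "A = \<theta> * x$2 - x$4"
    define B where "B = \<theta> * x$2 + x$4"
    define Dp where "Dp = (of_nat 2 * ((\<theta> * X x$2 - X x$4) * A ^ (2 - Suc 0)) * B - A\<^sup>2 * (\<theta> * X x$2 + X x$4)) / (B * B)"
    have dP: "((\<lambda>s. (\<theta> * z s$2 - z s$4)\<^sup>2 / (\<theta> * z s$2 + z s$4)) has_real_derivative Dp) (at t within {0..})"
      unfolding Dp_def A_def B_def x_def
      by (rule DERIV_divide[OF DERIV_power[OF dA[unfolded x_def]] dB[unfolded x_def]]) (use B0 x_def in simp)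
    have dV: "((\<lambda>s. Vf (z s)) has_real_derivative cc * X x$1 + cc' * X x$3 + \<alpha> * Dp) (at t within {0..})"
      unfolding Vf_def by (intro DERIV_add DERIV_cmult dc dP)
    have Dp_eq: "Dp = A * ((\<theta> * x$2 + 3 * x$4) * (\<theta> * X x$2) - (3 * \<theta> * x$2 + x$4) * X x$4) / B\<^sup>2"
    proof -
      have "Dp = A * ((2*B - A) * (\<theta> * X x$2) - (2*B + A) * X x$4) / B\<^sup>2"
        unfolding Dp_def by (rule phi_deriv_id)
      moreover have "2*B - A = \<theta> * x$2 + 3 * x$4" "2*B + A = 3 * \<theta> * x$2 + x$4"
        by (simp_all add: A_def B_def algebra_simps)
      ultimately show ?thesis by simp
    qed
    have "cc * X x$1 + cc' * X x$3 + \<alpha> * ((\<theta>*x$2 - x$4) * ((\<theta>*x$2 + 3*x$4) * (\<theta> * X x$2) - (3*\<theta>*x$2 + x$4) * X x$4) / (\<theta>*x$2 + x$4)\<^sup>2)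
         \<le> - 2 * (\<nu>E + \<delta>E) * x$1"
    proof (rule lyap_alg[where \<beta>E=\<beta>E and \<nu>E=\<nu>E and \<delta>E=\<delta>E and \<delta>M=\<delta>M and \<delta>F=\<delta>F and \<delta>s=\<delta>s
          and K=K and \<nu>=\<nu> and \<gamma>s=\<gamma>s and \<theta>=\<theta> and \<alpha>=\<alpha> and \<beta>s=\<beta>s and R=R and \<psi>=\<psi> and c=cc and c'=cc'
          and E="x$1" and M="x$2" and F="x$3" and Ms="x$4" and G="G x"])
      show "R = \<beta>E * \<nu> * \<nu>E / (\<delta>F * (\<nu>E + \<delta>E)) / (1 + \<gamma>s * \<theta>)"
        by (simp add: Rtheta_def R0_def)
      show "\<psi> = 2 * \<beta>E * \<nu> * \<nu>E / (\<delta>F * (1 - R) * (1 + \<gamma>s * \<theta>))"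
        by (simp add: psi_def)
      show "G x = \<gamma>s * \<psi> * x$1 * (\<theta> * x$2 + x$4)\<^sup>2 / (\<alpha> * (x$2 + \<gamma>s * x$4) * (3 * \<theta> * x$2 + x$4))
        + ((1 - \<nu>) * \<nu>E * \<theta> * x$1 - \<theta> * \<delta>M * x$2) * (\<theta> * x$2 + 3 * x$4) / (3 * \<theta> * x$2 + x$4)
        + \<delta>s * x$4 + (\<beta>s / \<alpha>) * (\<theta> * x$2 - x$4)"
        using G_eq[of x] True by (simp add: Gform_def)
    qed (use pos pos2 Rlt xnn True in \<open>auto simp: cc_def cc'_def X1 X2 X3 X4\<close>)
    then have "cc * X x$1 + cc' * X x$3 + \<alpha> * Dp \<le> - \<kappa> * x$1"
      unfolding Dp_eq A_def B_def \<kappa>_def by simp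
    then show ?thesis using dV by (auto simp: x_def)
  next
    case False
    then have x24: "x$2 = 0" "x$4 = 0" using xnn[of 2] xnn[of 4] by auto
    have znn': "\<And>i s. s \<ge> 0 \<Longrightarrow> z s $ i \<ge> 0" using znn by blast
    have "X x $ 2 = 0" by (rule min_deriv0[OF dc t]) (use znn' x24 x_def in auto)
    then have x1: "x$1 = 0" using x24 pos by (simp add: X2)
    have "X x $ 1 = 0" by (rule min_deriv0[OF dc t]) (use znn' x1 x_def in auto)
    then have x3: "x$3 = 0" using x1 pos by (simp add: X1)
    have X0: "\<And>i. X x $ i = 0"
    proof -
      fix i :: 4
      have "X x $ 3 = 0" using x1 x3 by (simp add: X3)
      moreover have "X x $ 4 = 0" using x24 by (simp add: X4 G_zero)
      moreover have "X x $ 1 = 0" "X x $ 2 = 0" using x1 x3 x24 by (simp_all add: X1 X2)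
      ultimately show "X x $ i = 0" using exhaust_4[of i] by auto
    qed
    have x0: "\<And>i. z t $ i = 0"
    proof -
      fix i :: 4 show "z t $ i = 0" using exhaust_4[of i] x1 x24 x3 by (auto simp: x_def)
    qed
    have V0: "Vf (z t) = 0" using x0 by (simp add: Vf_def)
    have q: "\<And>i. ((\<lambda>s. (z s $ i - z t $ i) / (s - t)) \<longlongrightarrow> 0) (at t within {0..})"
      using dc X0 by (simp add: has_field_derivative_iff)
    have "((\<lambda>s. (Vf (z s) - Vf (z t)) / (s - t)) \<longlongrightarrow> 0) (at t within {0..})"
    proof (rule Lim_null_comparison)
      show "eventually (\<lambda>s. norm ((Vf (z s) - Vf (z t)) / (s - t)) \<le>
          CV * (\<bar>(z s $ 1 - z t $ 1) / (s - t)\<bar> + \<bar>(z s $ 2 - z t $ 2) / (s - t)\<bar> + \<bar>(z s $ 3 - z t $ 3) / (s - t)\<bar> + \<bar>(z s $ 4 - z t $ 4) / (s - t)\<bar>)) (at t within {0..})"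
        unfolding eventually_at_filter
      proof (rule always_eventually, intro allI impI)
        fix s :: real assume s: "s \<noteq> t" "s \<in> {0..}"
        have sD: "z s \<in> Dprime" using zD s by auto
        have "Vf (z s) \<le> CV * (z s$1 + z s$2 + z s$3 + z s$4)" by (rule V_le[OF sD])
        moreover have "Vf (z s) \<ge> 0" by (rule V_ge(3)[OF sD])
        ultimately have "\<bar>Vf (z s)\<bar> / \<bar>s - t\<bar> \<le> CV * (z s$1 + z s$2 + z s$3 + z s$4) / \<bar>s - t\<bar>"
          by (intro divide_right_mono) auto
        also have "\<dots> = CV * (\<bar>z s $ 1 / (s - t)\<bar> + \<bar>z s $ 2 / (s - t)\<bar> + \<bar>z s $ 3 / (s - t)\<bar> + \<bar>z s $ 4 / (s - t)\<bar>)"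
          using znn[of s] s by (simp add: abs_divide field_simps)
        finally show "norm ((Vf (z s) - Vf (z t)) / (s - t)) \<le>
          CV * (\<bar>(z s $ 1 - z t $ 1) / (s - t)\<bar> + \<bar>(z s $ 2 - z t $ 2) / (s - t)\<bar> + \<bar>(z s $ 3 - z t $ 3) / (s - t)\<bar> + \<bar>(z s $ 4 - z t $ 4) / (s - t)\<bar>)"
          using V0 x0 by (simp add: abs_divide)
      qed
      show "((\<lambda>s. CV * (\<bar>(z s $ 1 - z t $ 1) / (s - t)\<bar> + \<bar>(z s $ 2 - z t $ 2) / (s - t)\<bar> + \<bar>(z s $ 3 - z t $ 3) / (s - t)\<bar> + \<bar>(z s $ 4 - z t $ 4) / (s - t)\<bar>)) \<longlongrightarrow> 0) (at t within {0..})"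
        using q[of 1] q[of 2] q[of 3] q[of 4]
        by (intro tendsto_mult_right_zero tendsto_add_zero tendsto_rabs_zero)
    qed
    then have "((\<lambda>s. Vf (z s)) has_real_derivative 0) (at t within {0..})"
      by (simp add: has_field_derivative_iff)
    then show ?thesis using x1 by (auto simp: x_def)
  qed
qed


lemma compd:
  assumes "0 \<le> a" "\<tau> \<ge> a" "(z has_vector_derivative X (z \<tau>)) (at \<tau> within {0..})"
  shows "((\<lambda>s. z s $ i) has_real_derivative X (z \<tau>) $ i) (at \<tau> within {a..b})"
  using comp_deriv[OF assms(3)] by (rule DERIV_subset) (use assms in auto)

lemma V_decr:
  assumes a: "0 \<le> a" "a \<le> b" and m: "\<And>\<tau>. \<tau> \<in> {a..b} \<Longrightarrow> z \<tau> $ 1 \<ge> m"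
  shows "Vf (z b) + \<kappa> * m * b \<le> Vf (z a) + \<kappa> * m * a"
proof -
  obtain N where N: "negligible N" "\<And>t. t \<ge> 0 \<Longrightarrow> t \<notin> N \<Longrightarrow> (z has_vector_derivative X (z t)) (at t within {0..})"
    using derivX by blast
  have pl: "plip (\<lambda>\<tau>. Vf (z \<tau>) + (\<kappa> * m) * \<tau>) {a..b}"
    by (rule plip_add_lin[OF plip_subset[OF plip_V]]) (use a in auto)
  have "(\<lambda>\<tau>. Vf (z \<tau>) + (\<kappa> * m) * \<tau>) b \<le> (\<lambda>\<tau>. Vf (z \<tau>) + (\<kappa> * m) * \<tau>) a"
  proof (rule core_mono[OF a(2) pl, of "insert 0 N"])
    show "negligible (insert 0 N)" using N(1) by simp
    fix \<tau> assume \<tau>: "\<tau> \<in> {a..<b} - insert 0 N"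
    then have tp: "\<tau> > 0" using a by auto
    obtain d where d: "((\<lambda>s. Vf (z s)) has_real_derivative d) (at \<tau> within {0..})" "d \<le> - \<kappa> * z \<tau> $ 1"
      using V_deriv[OF tp N(2)] tp \<tau> by auto
    have d': "((\<lambda>s. Vf (z s)) has_real_derivative d) (at \<tau> within {a..b})"
      using d(1) by (rule DERIV_subset) (use a in auto)
    have "((\<lambda>\<tau>. Vf (z \<tau>) + (\<kappa> * m) * \<tau>) has_real_derivative d + \<kappa> * m) (at \<tau> within {a..b})"
      using d' by (auto intro!: derivative_eq_intros)
    moreover have "d + \<kappa> * m \<le> 0"
    proof -
      have "\<kappa> * m \<le> \<kappa> * z \<tau> $ 1" using m[of \<tau>] \<tau> cc_pos(3) by (intro mult_left_mono) auto
      then show ?thesis using d(2) by simp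
    qed
    ultimately show "\<exists>d. ((\<lambda>\<tau>. Vf (z \<tau>) + \<kappa> * m * \<tau>) has_real_derivative d) (at \<tau> within {a..b}) \<and> d \<le> 0"
      by blast
  qed
  then show ?thesis by simp
qed

lemma V_mono: "0 \<le> a \<Longrightarrow> a \<le> b \<Longrightarrow> Vf (z b) \<le> Vf (z a)"
  using V_decr[of a b 0] znn by auto

lemma E_bound: "t \<ge> 0 \<Longrightarrow> z t $ 1 \<le> Vf (z 0) / cc"
  using V_ge(1)[OF zD[of t]] V_mono[of 0 t] cc_pos by (simp add: field_simps)

lemma F_bound: "t \<ge> 0 \<Longrightarrow> z t $ 3 \<le> Vf (z 0) / cc'"
  using V_ge(2)[OF zD[of t]] V_mono[of 0 t] cc_pos by (simp add: field_simps)

lemma comp_expo: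
  assumes st: "0 \<le> s" "s \<le> t" and dl: "\<delta> > 0" and b: "\<And>\<tau>. \<tau> \<in> {s..t} \<Longrightarrow> X (z \<tau>) $ i \<le> Gb - \<delta> * z \<tau> $ i"
  shows "z t $ i \<le> Gb / \<delta> + exp (- \<delta> * (t - s)) * (z s $ i - Gb / \<delta>)"
proof -
  obtain N where N: "negligible N" "\<And>t. t \<ge> 0 \<Longrightarrow> t \<notin> N \<Longrightarrow> (z has_vector_derivative X (z t)) (at t within {0..})"
    using derivX by blast
  show ?thesis
  proof (rule expo_bound[OF st(2) dl plip_subset[OF plip_comp] N(1)])
    show "{s..t} \<subseteq> {0..}" using st by auto
    fix \<tau> assume \<tau>: "\<tau> \<in> {s..<t} - N"
    then have "(z has_vector_derivative X (z \<tau>)) (at \<tau> within {0..})" using N(2) st by auto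
    then have "((\<lambda>s. z s $ i) has_real_derivative X (z \<tau>) $ i) (at \<tau> within {s..t})"
      by (intro compd[OF st(1)]) (use \<tau> in auto)
    then show "\<exists>d. ((\<lambda>s. z s $ i) has_real_derivative d) (at \<tau> within {s..t}) \<and> d \<le> Gb - \<delta> * z \<tau> $ i"
      using b[of \<tau>] \<tau> by auto
  qed
qed

lemma comp_expo_simple:
  assumes "0 \<le> s" "s \<le> t" "\<delta> > 0" "Gb \<ge> 0" "\<And>\<tau>. \<tau> \<in> {s..t} \<Longrightarrow> X (z \<tau>) $ i \<le> Gb - \<delta> * z \<tau> $ i"
  shows "z t $ i \<le> Gb / \<delta> + z s $ i"
proof -
  have e: "exp (- \<delta> * (t - s)) \<le> 1" "exp (- \<delta> * (t - s)) > 0" using assms by auto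
  have "exp (- \<delta> * (t - s)) * (z s $ i - Gb / \<delta>) \<le> exp (- \<delta> * (t - s)) * z s $ i"
    using assms e by (intro mult_left_mono) auto
  also have "\<dots> \<le> z s $ i" using e znn[of s i] assms(1) by (simp add: mult_left_le_one_le)
  finally show ?thesis using comp_expo[OF assms(1,2,3,5)] by linarith
qed


lemma norm_le_sum: "t \<ge> 0 \<Longrightarrow> norm (z t) \<le> z t$1 + z t$2 + z t$3 + z t$4"
proof -
  assume t: "t \<ge> 0"
  have "norm (z t) \<le> (\<Sum>i\<in>UNIV. \<bar>z t $ i\<bar>)" by (rule norm_le_l1_cart)
  also have "\<dots> = \<bar>z t$1\<bar> + \<bar>z t$2\<bar> + \<bar>z t$3\<bar> + \<bar>z t$4\<bar>" by (rule sum4)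
  also have "\<dots> = z t$1 + z t$2 + z t$3 + z t$4" using znn[OF t] by simp
  finally show ?thesis .
qed

lemma stab_bound:
  assumes t: "t \<ge> 0"
  shows "norm (z t) \<le> Kc * norm (z 0)"
proof -
  define n0 where "n0 = norm (z 0)"
  have n0: "n0 \<ge> 0" by (simp add: n0_def)
  have c0: "\<And>i. z 0 $ i \<le> n0" using component_le_norm_cart[of "z 0"] by (simp add: n0_def) (meson abs_ge_self order_trans)
  have V0: "Vf (z 0) \<le> CV * (4 * n0)"
  proof -
    have "Vf (z 0) \<le> CV * (z 0$1 + z 0$2 + z 0$3 + z 0$4)" by (rule V_le[OF zD]) simp
    also have "\<dots> \<le> CV * (4 * n0)" using c0[of 1] c0[of 2] c0[of 3] c0[of 4] CV_pos by (intro mult_left_mono) auto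
    finally show ?thesis .
  qed
  have Eb: "\<And>\<tau>. \<tau> \<ge> 0 \<Longrightarrow> z \<tau> $ 1 \<le> e0 * n0"
  proof -
    fix \<tau> :: real assume "\<tau> \<ge> 0"
    then have "z \<tau> $ 1 \<le> Vf (z 0) / cc" by (rule E_bound)
    also have "\<dots> \<le> CV * (4 * n0) / cc" using V0 cc_pos by (intro divide_right_mono) auto
    finally show "z \<tau> $ 1 \<le> e0 * n0" by (simp add: e0_def field_simps)
  qed
  have Fb: "z t $ 3 \<le> f0 * n0"
  proof -
    have "z t $ 3 \<le> Vf (z 0) / cc'" using t by (rule F_bound)
    also have "\<dots> \<le> CV * (4 * n0) / cc'" using V0 cc_pos by (intro divide_right_mono) auto
    finally show ?thesis by (simp add: f0_def field_simps)
  qed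
  have Mb: "\<And>\<tau>. \<tau> \<ge> 0 \<Longrightarrow> z \<tau> $ 2 \<le> m0 * n0"
  proof -
    fix \<tau> :: real assume \<tau>: "\<tau> \<ge> 0"
    have "z \<tau> $ 2 \<le> ((1 - \<nu>) * \<nu>E * (e0 * n0)) / \<delta>M + z 0 $ 2"
    proof (rule comp_expo_simple[OF order_refl \<tau> pos(4)])
      show "(1 - \<nu>) * \<nu>E * (e0 * n0) \<ge> 0" using pos consts_nn n0 by simp
      fix s assume s: "s \<in> {0..\<tau>}"
      have "(1 - \<nu>) * \<nu>E * z s $ 1 \<le> (1 - \<nu>) * \<nu>E * (e0 * n0)" using Eb[of s] s pos by (intro mult_left_mono) auto
      then show "X (z s) $ 2 \<le> (1 - \<nu>) * \<nu>E * (e0 * n0) - \<delta>M * z s $ 2" by (simp add: X2)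
    qed
    also have "\<dots> \<le> m0 * n0" using c0[of 2] pos by (simp add: m0_def field_simps)
    finally show "z \<tau> $ 2 \<le> m0 * n0" .
  qed
  have Sb: "z t $ 4 \<le> s0 * n0"
  proof -
    have "z t $ 4 \<le> (Cms * (e0 * n0 + m0 * n0)) / dms + z 0 $ 4"
    proof (rule comp_expo_simple[OF order_refl t dms_pos])
      show "Cms * (e0 * n0 + m0 * n0) \<ge> 0" using Cms_nn consts_nn n0 by simp
      fix s assume s: "s \<in> {0..t}"
      have "X (z s) $ 4 \<le> Cms * (z s $ 1 + z s $ 2) - dms * z s $ 4" by (rule X4_bound[OF zD]) (use s in auto)
      also have "Cms * (z s $ 1 + z s $ 2) \<le> Cms * (e0 * n0 + m0 * n0)"
        using Eb[of s] Mb[of s] s Cms_nn by (intro mult_left_mono add_mono) auto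
      finally show "X (z s) $ 4 \<le> Cms * (e0 * n0 + m0 * n0) - dms * z s $ 4" by simp
    qed
    also have "\<dots> \<le> s0 * n0" using c0[of 4] dms_pos by (simp add: s0_def field_simps)
    finally show ?thesis .
  qed
  have "norm (z t) \<le> z t$1 + z t$2 + z t$3 + z t$4" using t by (rule norm_le_sum)
  also have "\<dots> \<le> e0 * n0 + m0 * n0 + f0 * n0 + s0 * n0" using Eb[OF t] Mb[OF t] Fb Sb by linarith
  also have "\<dots> = Kc * n0" by (simp add: Kc_def algebra_simps)
  finally show ?thesis by (simp add: n0_def)
qed


definition "Eb = Vf (z 0) / cc"
definition "Fb = Vf (z 0) / cc'"
definition "Bl = \<beta>E * Fb * Eb / K + (\<nu>E + \<delta>E) * Eb"

lemma Bl_nn: "Bl \<ge> 0"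
proof -
  have "Vf (z 0) \<ge> 0" using V_ge(3)[OF zD] by simp
  then have "Eb \<ge> 0" "Fb \<ge> 0" using cc_pos by (simp_all add: Eb_def Fb_def)
  then show ?thesis using pos by (simp add: Bl_def)
qed

lemma E_lower:
  assumes "0 \<le> t" "t \<le> \<tau>"
  shows "z \<tau> $ 1 \<ge> z t $ 1 - Bl * (\<tau> - t)"
proof -
  obtain N where N: "negligible N" "\<And>t. t \<ge> 0 \<Longrightarrow> t \<notin> N \<Longrightarrow> (z has_vector_derivative X (z t)) (at t within {0..})"
    using derivX by blast
  have pn: "plip (\<lambda>s. - z s $ 1) {t..\<tau>}"
  proof -
    have "plip (\<lambda>s. z s $ 1) {t..\<tau>}" by (rule plip_subset[OF plip_comp]) (use assms in auto)
    then show ?thesis unfolding plip_def by (metis abs_minus_commute minus_diff_eq uminus_add_conv_diff diff_minus_eq_add add.commute)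
  qed
  have "(\<lambda>s. - z s $ 1 + (- Bl) * s) \<tau> \<le> (\<lambda>s. - z s $ 1 + (- Bl) * s) t"
  proof (rule core_mono[OF assms(2) plip_add_lin[OF pn] N(1)])
    fix s assume s: "s \<in> {t..<\<tau>} - N"
    then have "(z has_vector_derivative X (z s)) (at s within {0..})" using N(2) assms by auto
    then have d: "((\<lambda>s. z s $ 1) has_real_derivative X (z s) $ 1) (at s within {t..\<tau>})"
      by (intro compd[OF assms(1)]) (use s in auto)
    have "X (z s) $ 1 \<ge> - Bl" unfolding Bl_def
      by (rule X1_lower[OF zD]) (use s assms E_bound F_bound in \<open>auto simp: Eb_def Fb_def\<close>)
    moreover have "((\<lambda>s. - z s $ 1 + (- Bl) * s) has_real_derivative - X (z s) $ 1 + (- Bl)) (at s within {t..\<tau>})"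
      using d by (auto intro!: derivative_eq_intros)
    ultimately show "\<exists>d. ((\<lambda>s. - z s $ 1 + - Bl * s) has_real_derivative d) (at s within {t..\<tau>}) \<and> d \<le> 0"
      by (intro exI conjI) auto
  qed
  then show ?thesis by (simp add: algebra_simps)
qed

lemma E_tendsto: "((\<lambda>t. z t $ 1) \<longlongrightarrow> 0) at_top"
proof (rule ccontr)
  assume nt: "\<not> ((\<lambda>t. z t $ 1) \<longlongrightarrow> 0) at_top"
  obtain \<epsilon> where \<epsilon>: "\<epsilon> > 0" "\<not> eventually (\<lambda>t. dist (z t $ 1) 0 < \<epsilon>) at_top"
    using nt unfolding tendsto_iff by blast
  have fr: "\<And>T. \<exists>t\<ge>T. t \<ge> 0 \<and> z t $ 1 \<ge> \<epsilon>"
  proof -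
    fix T :: real
    have "\<not> (\<forall>n\<ge>max T 0. dist (z n $ 1) 0 < \<epsilon>)" using \<epsilon>(2) unfolding eventually_at_top_linorder by blast
    then obtain n where n: "n \<ge> max T 0" "\<not> dist (z n $ 1) 0 < \<epsilon>" by blast
    then have "z n $ 1 \<ge> \<epsilon>" using znn[of n 1] by (simp add: dist_real_def)
    then show "\<exists>t\<ge>T. t \<ge> 0 \<and> z t $ 1 \<ge> \<epsilon>" using n by (intro exI[of _ n]) auto
  qed
  define h where "h = \<epsilon> / (2 * (Bl + 1))"
  have hp: "h > 0" using \<epsilon> Bl_nn by (simp add: h_def)
  have Blh: "Bl * h \<le> \<epsilon> / 2"
  proof -
    have "Bl * h = \<epsilon> / 2 * (Bl / (Bl + 1))" using Bl_nn by (simp add: h_def field_simps)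
    also have "\<dots> \<le> \<epsilon> / 2 * 1" using \<epsilon> Bl_nn by (intro mult_left_mono) auto
    finally show ?thesis by simp
  qed
  define Vs where "Vs = (\<lambda>t. Vf (z t)) ` {0..}"
  have bdd: "bdd_below Vs" unfolding Vs_def bdd_below_def using V_ge(3)[OF zD] by auto
  have ne: "Vs \<noteq> {}" by (simp add: Vs_def)
  define L where "L = Inf Vs"
  have Lle: "\<And>s. s \<ge> 0 \<Longrightarrow> L \<le> Vf (z s)" unfolding L_def Vs_def using bdd[unfolded Vs_def]
    by (intro cInf_lower) auto
  have "Inf Vs < L + \<kappa> * \<epsilon> * h / 2" using cc_pos \<epsilon> hp by (simp add: L_def)
  then obtain v where "v \<in> Vs" "v < L + \<kappa> * \<epsilon> * h / 2" using cInf_less_iff[OF ne bdd] by blast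
  then obtain T where T: "T \<ge> 0" "Vf (z T) < L + \<kappa> * \<epsilon> * h / 2" by (auto simp: Vs_def)
  obtain t where t: "t \<ge> T" "t \<ge> 0" "z t $ 1 \<ge> \<epsilon>" using fr[of T] by blast
  have low: "\<And>\<tau>. \<tau> \<in> {t..t+h} \<Longrightarrow> z \<tau> $ 1 \<ge> \<epsilon> / 2"
  proof -
    fix \<tau> assume \<tau>: "\<tau> \<in> {t..t+h}"
    have "z \<tau> $ 1 \<ge> z t $ 1 - Bl * (\<tau> - t)" using E_lower[of t \<tau>] t \<tau> by auto
    moreover have "Bl * (\<tau> - t) \<le> Bl * h" using \<tau> Bl_nn by (intro mult_left_mono) auto
    ultimately show "z \<tau> $ 1 \<ge> \<epsilon> / 2" using Blh t(3) by linarith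
  qed
  have "Vf (z (t + h)) + \<kappa> * (\<epsilon> / 2) * (t + h) \<le> Vf (z t) + \<kappa> * (\<epsilon> / 2) * t"
    by (rule V_decr) (use t hp low in auto)
  moreover have "\<kappa> * (\<epsilon> / 2) * (t + h) = \<kappa> * (\<epsilon> / 2) * t + \<kappa> * \<epsilon> * h / 2" by (simp add: algebra_simps)
  ultimately have "Vf (z (t + h)) \<le> Vf (z t) - \<kappa> * \<epsilon> * h / 2" by linarith
  also have "Vf (z t) \<le> Vf (z T)" using V_mono t T by auto
  finally have "Vf (z (t + h)) < L" using T(2) by simp
  moreover have "L \<le> Vf (z (t + h))" using Lle t hp by simp
  ultimately show False by simp
qed

lemma comp_tendsto:
  assumes dl: "\<delta> > 0" and g: "(g \<longlongrightarrow> 0) at_top"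
    and b: "\<And>\<tau>. \<tau> \<ge> 0 \<Longrightarrow> X (z \<tau>) $ i \<le> g \<tau> - \<delta> * z \<tau> $ i"
  shows "((\<lambda>t. z t $ i) \<longlongrightarrow> 0) at_top"
  unfolding tendsto_iff
proof (intro allI impI)
  fix \<epsilon> :: real assume \<epsilon>: "\<epsilon> > 0"
  define \<eta> where "\<eta> = \<delta> * \<epsilon> / 4"
  have \<eta>: "\<eta> > 0" using dl \<epsilon> by (simp add: \<eta>_def)
  have "eventually (\<lambda>\<tau>. dist (g \<tau>) 0 < \<eta>) at_top" using g \<eta> unfolding tendsto_iff by blast
  then obtain T0 where T0: "\<And>\<tau>. \<tau> \<ge> T0 \<Longrightarrow> g \<tau> < \<eta>"
    unfolding eventually_at_top_linorder dist_real_def by fastforce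
  define T where "T = max T0 0"
  define c where "c = z T $ i"
  have c0: "c \<ge> 0" using znn by (simp add: c_def T_def)
  define T1 where "T1 = T + 2 * c / (\<delta> * \<epsilon>)"
  show "eventually (\<lambda>t. dist (z t $ i) 0 < \<epsilon>) at_top"
    unfolding eventually_at_top_linorder
  proof (intro exI[of _ T1] allI impI)
    fix t assume t: "t \<ge> T1"
    have T1T: "T1 \<ge> T" using c0 dl \<epsilon> by (simp add: T1_def)
    have tT: "t \<ge> T" "T \<ge> 0" using t T1T by (auto simp: T_def)
    have "z t $ i \<le> \<eta> / \<delta> + exp (- \<delta> * (t - T)) * (z T $ i - \<eta> / \<delta>)"
    proof (rule comp_expo[OF tT(2) tT(1) dl])
      fix \<tau> assume "\<tau> \<in> {T..t}"
      then have "\<tau> \<ge> 0" "\<tau> \<ge> T0" using tT by (auto simp: T_def)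
      then show "X (z \<tau>) $ i \<le> \<eta> - \<delta> * z \<tau> $ i" using b[of \<tau>] T0[of \<tau>] by linarith
    qed
    also have "\<dots> \<le> \<eta> / \<delta> + exp (- \<delta> * (t - T)) * c"
      using \<eta> dl by (simp add: c_def right_diff_distrib)
    also have "exp (- \<delta> * (t - T)) * c \<le> c / (1 + \<delta> * (t - T))"
    proof -
      define y where "y = \<delta> * (t - T)"
      have y: "y \<ge> 0" using dl tT by (simp add: y_def)
      have "1 + y \<le> exp y" by (rule exp_ge_add_one_self)
      then have "inverse (exp y) \<le> inverse (1 + y)" using y by (intro le_imp_inverse_le) auto
      then have e: "exp (- y) \<le> 1 / (1 + y)" by (simp add: exp_minus inverse_eq_divide)
      have "exp (- y) * c \<le> 1 / (1 + y) * c" using e c0 by (rule mult_right_mono)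
      then show ?thesis by (simp add: y_def)
    qed
    also have "c / (1 + \<delta> * (t - T)) < \<epsilon> / 2"
    proof -
      have "\<delta> * (t - T) \<ge> \<delta> * (2 * c / (\<delta> * \<epsilon>))" using t dl by (intro mult_left_mono) (auto simp: T1_def)
      also have "\<delta> * (2 * c / (\<delta> * \<epsilon>)) = 2 * c / \<epsilon>" using dl by (simp add: field_simps)
      finally have "1 + \<delta> * (t - T) > 2 * c / \<epsilon>" by simp
      then have "c < \<epsilon> / 2 * (1 + \<delta> * (t - T))" using \<epsilon> by (simp add: field_simps)
      moreover have "1 + \<delta> * (t - T) > 0" using dl tT by (simp add: add_pos_nonneg)
      ultimately show ?thesis by (simp add: divide_less_eq)
    qed
    finally have "z t $ i < \<eta> / \<delta> + \<epsilon> / 2" by simp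
    moreover have "\<eta> / \<delta> = \<epsilon> / 4" using dl by (simp add: \<eta>_def)
    moreover have "z t $ i \<ge> 0" using znn tT by simp
    ultimately show "dist (z t $ i) 0 < \<epsilon>" using \<epsilon> by (simp add: dist_real_def)
  qed
qed

end


theorem theorem4:
  fixes \<beta>E \<nu>E \<delta>E \<delta>M \<delta>F \<delta>s K \<nu> \<gamma>s \<theta> \<alpha> \<beta>s :: real
  assumes "\<beta>E > 0" "\<nu>E > 0" "\<delta>E > 0" "\<delta>M > 0" "\<delta>F > 0" "\<delta>s > 0" "K > 0"
    and "0 < \<nu>" "\<nu> < 1" and "0 < \<gamma>s" "\<gamma>s \<le> 1"
    and "\<delta>s \<ge> \<delta>M"
    and "\<theta> > 0" "Rtheta \<beta>E \<nu> \<nu>E \<delta>E \<delta>F \<gamma>s \<theta> < 1"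
    and "\<alpha> > 0" "\<beta>s > 0"
  shows "filippov_GAS Dprime (Xcl \<beta>E \<nu>E \<delta>E \<delta>M \<delta>F \<delta>s K \<nu> \<gamma>s \<theta> \<alpha> \<beta>s) Dprime"
proof -
  interpret S: sys \<beta>E \<nu>E \<delta>E \<delta>M \<delta>F \<delta>s K \<nu> \<gamma>s \<theta> \<alpha> \<beta>s
    by unfold_locales (use assms in auto)
  have stab: "\<forall>\<epsilon>>0. \<exists>\<delta>>0. \<forall>z. filippov_solution Dprime S.X z \<and> z 0 \<in> Dprime \<and> norm (z 0) < \<delta> \<longrightarrow>
         (\<forall>t>0. norm (z t) < \<epsilon>)"
  proof (intro allI impI)
    fix \<epsilon> :: real assume \<epsilon>: "\<epsilon> > 0"
    show "\<exists>\<delta>>0. \<forall>z. filippov_solution Dprime S.X z \<and> z 0 \<in> Dprime \<and> norm (z 0) < \<delta> \<longrightarrow>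
         (\<forall>t>0. norm (z t) < \<epsilon>)"
    proof (intro exI[of _ "\<epsilon> / S.Kc"] conjI allI impI)
      show "\<epsilon> / S.Kc > 0" using \<epsilon> S.consts_nn(5) by simp
      fix z t assume z: "filippov_solution Dprime S.X z \<and> z 0 \<in> Dprime \<and> norm (z 0) < \<epsilon> / S.Kc"
        and t: "(t::real) > 0"
      interpret Z: sol \<beta>E \<nu>E \<delta>E \<delta>M \<delta>F \<delta>s K \<nu> \<gamma>s \<theta> \<alpha> \<beta>s z
        by unfold_locales (use z in auto)
      have "norm (z t) \<le> S.Kc * norm (z 0)" using Z.stab_bound t by simp
      also have "\<dots> < S.Kc * (\<epsilon> / S.Kc)" using z S.consts_nn(5) by (intro mult_strict_left_mono) auto
      also have "\<dots> = \<epsilon>" using S.consts_nn(5) by simp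
      finally show "norm (z t) < \<epsilon>" .
    qed
  qed
  have attr: "\<forall>z. filippov_solution Dprime S.X z \<and> z 0 \<in> Dprime \<longrightarrow> (z \<longlongrightarrow> 0) at_top"
  proof (intro allI impI)
    fix z assume z: "filippov_solution Dprime S.X z \<and> z 0 \<in> Dprime"
    interpret Z: sol \<beta>E \<nu>E \<delta>E \<delta>M \<delta>F \<delta>s K \<nu> \<gamma>s \<theta> \<alpha> \<beta>s z
      by unfold_locales (use z in auto)
    have E: "((\<lambda>t. z t $ 1) \<longlongrightarrow> 0) at_top" by (rule Z.E_tendsto)
    have M: "((\<lambda>t. z t $ 2) \<longlongrightarrow> 0) at_top"
    proof (rule Z.comp_tendsto[of \<delta>M "\<lambda>\<tau>. (1 - \<nu>) * \<nu>E * z \<tau> $ 1"])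
      show "\<delta>M > 0" using assms by simp
      show "((\<lambda>\<tau>. (1 - \<nu>) * \<nu>E * z \<tau> $ 1) \<longlongrightarrow> 0) at_top" using E by (rule tendsto_mult_right_zero)
      fix \<tau> :: real assume "\<tau> \<ge> 0"
      show "S.X (z \<tau>) $ 2 \<le> (1 - \<nu>) * \<nu>E * z \<tau> $ 1 - \<delta>M * z \<tau> $ 2" by (simp add: S.X2)
    qed
    have F: "((\<lambda>t. z t $ 3) \<longlongrightarrow> 0) at_top"
    proof (rule Z.comp_tendsto[of \<delta>F "\<lambda>\<tau>. \<nu> * \<nu>E * z \<tau> $ 1"])
      show "\<delta>F > 0" using assms by simp
      show "((\<lambda>\<tau>. \<nu> * \<nu>E * z \<tau> $ 1) \<longlongrightarrow> 0) at_top" using E by (rule tendsto_mult_right_zero)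
      fix \<tau> :: real assume "\<tau> \<ge> 0"
      then show "S.X (z \<tau>) $ 3 \<le> \<nu> * \<nu>E * z \<tau> $ 1 - \<delta>F * z \<tau> $ 3" by (rule S.X3_bound[OF Z.zD])
    qed
    have Ms: "((\<lambda>t. z t $ 4) \<longlongrightarrow> 0) at_top"
    proof (rule Z.comp_tendsto[of S.dms "\<lambda>\<tau>. S.Cms * (z \<tau> $ 1 + z \<tau> $ 2)"])
      show "S.dms > 0" by (rule S.dms_pos)
      show "((\<lambda>\<tau>. S.Cms * (z \<tau> $ 1 + z \<tau> $ 2)) \<longlongrightarrow> 0) at_top"
        using E M by (intro tendsto_mult_right_zero tendsto_add_zero)
      fix \<tau> :: real assume "\<tau> \<ge> 0"
      then show "S.X (z \<tau>) $ 4 \<le> S.Cms * (z \<tau> $ 1 + z \<tau> $ 2) - S.dms * z \<tau> $ 4" by (rule S.X4_bound[OF Z.zD])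
    qed
    have "((\<lambda>t. norm (z t)) \<longlongrightarrow> 0) at_top"
    proof (rule Lim_null_comparison)
      show "eventually (\<lambda>t. norm (norm (z t)) \<le> z t $ 1 + z t $ 2 + z t $ 3 + z t $ 4) at_top"
        using eventually_ge_at_top[of "0::real"] by eventually_elim (simp add: Z.norm_le_sum)
      show "((\<lambda>t. z t $ 1 + z t $ 2 + z t $ 3 + z t $ 4) \<longlongrightarrow> 0) at_top"
        using E M F Ms by (intro tendsto_add_zero)
    qed
    then show "(z \<longlongrightarrow> 0) at_top" by (simp add: tendsto_norm_zero_iff)
  qed
  show ?thesis unfolding filippov_GAS_def using stab attr by blast
qed


end
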